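(* Let $\Bbbk$ be a field, $H$ a Hopf $\Bbbk$-algebra with bijective antipode, and $A$ a left $H$-module $\Bbbk$-algebra. If $A$ is $H$-prime, then the extended $H$-center $\mathcal{C}^H A$ is a field. Conversely, if $A$ is semiprime and $\mathcal{C}^H A$ is a field, then $A$ is $H$-prime.
   Context: A left $H$-module algebra is a $\Bbbk$-algebra $A$ with $1$ that is a left $H$-module via $h\otimes a\mapsto h.a$ such that $h.(ab)=(h_1.a)(h_2.b)$ (Sweedler notation) and $h.1=\varepsilon(h)1$. An $H$-ideal is a two-sided ideal that is an $H$-submodule. $A$ is $H$-prime if $A\neq 0$ and the product of any two nonzero $H$-ideals of $A$ is nonzero. $\operatorname{Q} A$ is the symmetric (Martindale) ring of quotients of $A$; for $q\in\operatorname{Q} A$, $D_q=\{ a \in A \mid qAa \subseteq A,\ aAq \subseteq A \}$. Let $\operatorname{Q}^H A = \{ q \in \operatorname{Q} A \mid h.(dq) = (h.d)q,\ h.(qd) = q(h.d)\ \forall h \in H, d \in D_q \}$, let $\mathcal{C} A$ be the center of $\operatorname{Q} A$ (the extended center), and let $\mathcal{C}^H A = \mathcal{C} A \cap \operatorname{Q}^H A$, the extended $H$-center of $A$. *)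

theory Defs
  imports Main "HOL.Vector_Spaces" "HOL-Algebra.Ring"
begin

text \<open>An element of V \<otimes> W (over a field k) is represented by a finite list of pairs
  [(v1,w1),...,(vn,wn)] standing for v1 \<otimes> w1 + ... + vn \<otimes> wn.  Two such lists represent
  the same tensor iff every k-bilinear form V \<times> W \<rightarrow> k takes the same value on them
  (over a field, the bilinear forms separate the points of V \<otimes> W).\<close>

definition bilinear_form ::
  "('k::field \<Rightarrow> 'v::ab_group_add \<Rightarrow> 'v) \<Rightarrow> ('k \<Rightarrow> 'w::ab_group_add \<Rightarrow> 'w) \<Rightarrow> ('v \<Rightarrow> 'w \<Rightarrow> 'k) \<Rightarrow> bool"
  where "bilinear_form sV sW \<phi> \<longleftrightarrow>
     (\<forall>w. Vector_Spaces.linear sV ((*)) (\<lambda>v. \<phi> v w)) \<and>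
     (\<forall>v. Vector_Spaces.linear sW ((*)) (\<lambda>w. \<phi> v w))"

definition tensor_eq ::
  "('k::field \<Rightarrow> 'v::ab_group_add \<Rightarrow> 'v) \<Rightarrow> ('k \<Rightarrow> 'w::ab_group_add \<Rightarrow> 'w) \<Rightarrow>
   ('v \<times> 'w) list \<Rightarrow> ('v \<times> 'w) list \<Rightarrow> bool"
  where "tensor_eq sV sW xs ys \<longleftrightarrow>
     (\<forall>\<phi>. bilinear_form sV sW \<phi> \<longrightarrow>
        (\<Sum>(v,w)\<leftarrow>xs. \<phi> v w) = (\<Sum>(v,w)\<leftarrow>ys. \<phi> v w))"

definition trilinear_form ::
  "('k::field \<Rightarrow> 'v::ab_group_add \<Rightarrow> 'v) \<Rightarrow> ('v \<Rightarrow> 'v \<Rightarrow> 'v \<Rightarrow> 'k) \<Rightarrow> bool"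
  where "trilinear_form sV \<phi> \<longleftrightarrow>
     (\<forall>y z. Vector_Spaces.linear sV ((*)) (\<lambda>x. \<phi> x y z)) \<and>
     (\<forall>x z. Vector_Spaces.linear sV ((*)) (\<lambda>y. \<phi> x y z)) \<and>
     (\<forall>x y. Vector_Spaces.linear sV ((*)) (\<lambda>z. \<phi> x y z))"

definition tensor3_eq ::
  "('k::field \<Rightarrow> 'v::ab_group_add \<Rightarrow> 'v) \<Rightarrow> ('v \<times> 'v \<times> 'v) list \<Rightarrow> ('v \<times> 'v \<times> 'v) list \<Rightarrow> bool"
  where "tensor3_eq sV xs ys \<longleftrightarrow>
     (\<forall>\<phi>. trilinear_form sV \<phi> \<longrightarrow>
        (\<Sum>(x,y,z)\<leftarrow>xs. \<phi> x y z) = (\<Sum>(x,y,z)\<leftarrow>ys. \<phi> x y z))"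

definition k_algebra :: "('k::field \<Rightarrow> 'r::ring_1 \<Rightarrow> 'r) \<Rightarrow> bool"
  where "k_algebra s \<longleftrightarrow> vector_space s \<and>
     (\<forall>c x y. s c (x * y) = s c x * y \<and> s c (x * y) = x * s c y)"

definition hopf_algebra ::
  "('k::field \<Rightarrow> 'h::ring_1 \<Rightarrow> 'h) \<Rightarrow> ('h \<Rightarrow> ('h \<times> 'h) list) \<Rightarrow> ('h \<Rightarrow> 'k) \<Rightarrow> ('h \<Rightarrow> 'h) \<Rightarrow> bool"
  where "hopf_algebra sH \<Delta> \<epsilon> S \<longleftrightarrow>
     k_algebra sH \<and>
     \<comment> \<open>\<Delta> is k-linear H \<rightarrow> H \<otimes> H\<close>
     (\<forall>c g h. tensor_eq sH sH (\<Delta> (sH c g + h))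
                 (map (\<lambda>(x,y). (sH c x, y)) (\<Delta> g) @ \<Delta> h)) \<and>
     \<comment> \<open>\<epsilon> is k-linear H \<rightarrow> k\<close>
     Vector_Spaces.linear sH ((*)) \<epsilon> \<and>
     \<comment> \<open>coassociativity\<close>
     (\<forall>h. tensor3_eq sH
            (concat (map (\<lambda>(x,y). map (\<lambda>(u,v). (u,v,y)) (\<Delta> x)) (\<Delta> h)))
            (concat (map (\<lambda>(x,y). map (\<lambda>(u,v). (x,u,v)) (\<Delta> y)) (\<Delta> h)))) \<and>
     \<comment> \<open>counit\<close>
     (\<forall>h. (\<Sum>(x,y)\<leftarrow>\<Delta> h. sH (\<epsilon> x) y) = h \<and> (\<Sum>(x,y)\<leftarrow>\<Delta> h. sH (\<epsilon> y) x) = h) \<and>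
     \<comment> \<open>\<Delta> and \<epsilon> are algebra maps\<close>
     (\<forall>g h. tensor_eq sH sH (\<Delta> (g * h))
              (concat (map (\<lambda>(x,y). map (\<lambda>(x',y'). (x * x', y * y')) (\<Delta> h)) (\<Delta> g)))) \<and>
     tensor_eq sH sH (\<Delta> 1) [(1,1)] \<and>
     (\<forall>g h. \<epsilon> (g * h) = \<epsilon> g * \<epsilon> h) \<and> \<epsilon> 1 = 1 \<and>
     \<comment> \<open>antipode\<close>
     Vector_Spaces.linear sH sH S \<and>
     (\<forall>h. (\<Sum>(x,y)\<leftarrow>\<Delta> h. S x * y) = sH (\<epsilon> h) 1 \<and>
          (\<Sum>(x,y)\<leftarrow>\<Delta> h. x * S y) = sH (\<epsilon> h) 1)"

definition module_algebra ::
  "('k::field \<Rightarrow> 'h::ring_1 \<Rightarrow> 'h) \<Rightarrow> ('h \<Rightarrow> ('h \<times> 'h) list) \<Rightarrow> ('h \<Rightarrow> 'k) \<Rightarrow>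
   ('k \<Rightarrow> 'a::ring_1 \<Rightarrow> 'a) \<Rightarrow> ('h \<Rightarrow> 'a \<Rightarrow> 'a) \<Rightarrow> bool"
  where "module_algebra sH \<Delta> \<epsilon> sA act \<longleftrightarrow>
     k_algebra sA \<and>
     \<comment> \<open>left H-module (k-bilinear action)\<close>
     (\<forall>h. Vector_Spaces.linear sA sA (act h)) \<and>
     (\<forall>a. Vector_Spaces.linear sH sA (\<lambda>h. act h a)) \<and>
     (\<forall>a. act 1 a = a) \<and>
     (\<forall>g h a. act (g * h) a = act g (act h a)) \<and>
     \<comment> \<open>module algebra axioms\<close>
     (\<forall>h a b. act h (a * b) = (\<Sum>(x,y)\<leftarrow>\<Delta> h. act x a * act y b)) \<and>
     (\<forall>h. act h 1 = sA (\<epsilon> h) 1)"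

definition ring_ideal :: "'a::ring_1 set \<Rightarrow> bool"
  where "ring_ideal I \<longleftrightarrow> 0 \<in> I \<and> (\<forall>x\<in>I. \<forall>y\<in>I. x + y \<in> I) \<and> (\<forall>x\<in>I. - x \<in> I) \<and>
     (\<forall>x\<in>I. \<forall>r. r * x \<in> I \<and> x * r \<in> I)"

definition H_ideal :: "('h \<Rightarrow> 'a::ring_1 \<Rightarrow> 'a) \<Rightarrow> 'a set \<Rightarrow> bool"
  where "H_ideal act I \<longleftrightarrow> ring_ideal I \<and> (\<forall>h. \<forall>x\<in>I. act h x \<in> I)"

definition ideal_prod :: "'a::ring_1 set \<Rightarrow> 'a set \<Rightarrow> 'a set"
  where "ideal_prod I J = {(\<Sum>(x,y)\<leftarrow>ps. x * y) | ps. set ps \<subseteq> I \<times> J}"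

definition H_prime :: "('h \<Rightarrow> 'a::ring_1 \<Rightarrow> 'a) \<Rightarrow> bool"
  where "H_prime act \<longleftrightarrow> (UNIV :: 'a set) \<noteq> {0} \<and>
     (\<forall>I J. H_ideal act I \<and> H_ideal act J \<and> I \<noteq> {0} \<and> J \<noteq> {0} \<longrightarrow> ideal_prod I J \<noteq> {0})"

definition semiprime :: "'a::ring_1 itself \<Rightarrow> bool"
  where "semiprime _ \<longleftrightarrow> (\<forall>I::'a set. ring_ideal I \<and> ideal_prod I I = {0} \<longrightarrow> I = {0})"

definition dense_ideals :: "'a::ring_1 set set"
  where "dense_ideals = {I. ring_ideal I \<and>
     (\<forall>x. (\<forall>i\<in>I. x * i = 0) \<longrightarrow> x = 0) \<and> (\<forall>x. (\<forall>i\<in>I. i * x = 0) \<longrightarrow> x = 0)}"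

text \<open>\<iota> : A \<rightarrow> Q exhibits Q as the symmetric ring of quotients of A (characterization
  of Beidar--Martindale--Mikhalev; Q is unique up to isomorphism over A).\<close>
definition sym_ring_of_quotients :: "('a::ring_1 \<Rightarrow> 'q::ring_1) \<Rightarrow> bool"
  where "sym_ring_of_quotients \<iota> \<longleftrightarrow>
     inj \<iota> \<and> (\<forall>x y. \<iota> (x + y) = \<iota> x + \<iota> y) \<and> (\<forall>x y. \<iota> (x * y) = \<iota> x * \<iota> y) \<and> \<iota> 1 = 1 \<and>
     (\<forall>q. \<exists>I\<in>dense_ideals. \<forall>x\<in>I. q * \<iota> x \<in> range \<iota> \<and> \<iota> x * q \<in> range \<iota>) \<and>
     (\<forall>q. \<forall>I\<in>dense_ideals. (\<forall>x\<in>I. q * \<iota> x = 0) \<longrightarrow> q = 0) \<and>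
     (\<forall>q. \<forall>I\<in>dense_ideals. (\<forall>x\<in>I. \<iota> x * q = 0) \<longrightarrow> q = 0) \<and>
     (\<forall>I\<in>dense_ideals. \<forall>f g.
        (\<forall>x\<in>I. \<forall>y\<in>I. f (x + y) = f x + f y \<and> g (x + y) = g x + g y) \<and>
        (\<forall>x\<in>I. \<forall>r. f (x * r) = f x * r \<and> g (r * x) = r * g x) \<and>
        (\<forall>x\<in>I. \<forall>y\<in>I. x * f y = g x * y) \<longrightarrow>
        (\<exists>q. \<forall>x\<in>I. q * \<iota> x = \<iota> (f x) \<and> \<iota> x * q = \<iota> (g x)))"

definition D_set :: "('a::ring_1 \<Rightarrow> 'q::ring_1) \<Rightarrow> 'q \<Rightarrow> 'a set"
  where "D_set \<iota> q = {a. \<forall>r. q * \<iota> r * \<iota> a \<in> range \<iota> \<and> \<iota> a * \<iota> r * q \<in> range \<iota>}"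

definition QH :: "('h \<Rightarrow> 'a::ring_1 \<Rightarrow> 'a) \<Rightarrow> ('a \<Rightarrow> 'q::ring_1) \<Rightarrow> 'q set"
  where "QH act \<iota> = {q. \<forall>h. \<forall>d\<in>D_set \<iota> q. \<forall>e.
      (\<iota> e = \<iota> d * q \<longrightarrow> \<iota> (act h e) = \<iota> (act h d) * q) \<and>
      (\<iota> e = q * \<iota> d \<longrightarrow> \<iota> (act h e) = q * \<iota> (act h d))}"

definition extended_center :: "'q::ring_1 set"
  where "extended_center = {q. \<forall>p. q * p = p * q}"

definition extended_H_center :: "('h \<Rightarrow> 'a::ring_1 \<Rightarrow> 'a) \<Rightarrow> ('a \<Rightarrow> 'q::ring_1) \<Rightarrow> 'q set"
  where "extended_H_center act \<iota> = extended_center \<inter> QH act \<iota>"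

definition subring_struct :: "'q::ring_1 set \<Rightarrow> 'q ring"
  where "subring_struct C = \<lparr>carrier = C, monoid.mult = (*), one = 1, zero = 0, add = (+)\<rparr>"

end

theory Submission
  imports Defs
begin


lemma sep_functional:
  fixes s :: "'k::field \<Rightarrow> 'v::ab_group_add \<Rightarrow> 'v"
  assumes vs: "vector_space s" and v: "v \<noteq> 0"
  shows "\<exists>\<phi>. Vector_Spaces.linear s (*) \<phi> \<and> \<phi> v \<noteq> 0"
proof -
  interpret vector_space s by fact
  have ind: "independent {v}" using v by simp
  define B where "B = extend_basis {v}"
  have iB: "independent B" and sB: "span B = UNIV" and vB: "v \<in> B"
    using independent_extend_basis[OF ind] span_extend_basis[OF ind] extend_basis_superset[OF ind]
    unfolding B_def by auto
  have "Vector_Spaces.linear s (*) (\<lambda>w. representation B w v)"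
    by (rule linear_representation[OF iB sB])
  moreover have "representation B v v = 1" using representation_basis[OF iB vB] by simp
  ultimately show ?thesis by (intro exI[of _ "\<lambda>w. representation B w v"]) auto
qed

lemma additive_sum_list:
  assumes "\<And>x y. \<phi> (x + y) = \<phi> x + \<phi> y" "\<phi> 0 = 0"
  shows "\<phi> (sum_list (map f xs)) = sum_list (map (\<lambda>x. \<phi> (f x)) xs)"
  using assms by (induction xs) auto

lemma linear_sum_list:
  assumes "Vector_Spaces.linear s1 s2 \<phi>"
  shows "\<phi> (sum_list (map f xs)) = sum_list (map (\<lambda>x. \<phi> (f x)) xs)"
proof -
  interpret linear s1 s2 \<phi> by fact
  show ?thesis by (rule additive_sum_list) (auto simp: add)
qed

lemma tensor3_transfer:
  fixes sV :: "'k::field \<Rightarrow> 'v::ab_group_add \<Rightarrow> 'v"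
  assumes vs: "vector_space sV" and te: "tensor3_eq sH xs ys"
    and l1: "\<And>y z. Vector_Spaces.linear sH sV (\<lambda>x. T x y z)"
    and l2: "\<And>x z. Vector_Spaces.linear sH sV (\<lambda>y. T x y z)"
    and l3: "\<And>x y. Vector_Spaces.linear sH sV (\<lambda>z. T x y z)"
  shows "(\<Sum>(x,y,z)\<leftarrow>xs. T x y z) = (\<Sum>(x,y,z)\<leftarrow>ys. T x y z)"
proof (rule ccontr)
  let ?L = "(\<Sum>(x,y,z)\<leftarrow>xs. T x y z)" and ?R = "(\<Sum>(x,y,z)\<leftarrow>ys. T x y z)"
  assume "?L \<noteq> ?R"
  then have "?L - ?R \<noteq> 0" by simp
  then obtain \<phi> where lp: "Vector_Spaces.linear sV (*) \<phi>" and nz: "\<phi> (?L - ?R) \<noteq> 0"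
    using sep_functional[OF vs] by blast
  have "trilinear_form sH (\<lambda>x y z. \<phi> (T x y z))"
    unfolding trilinear_form_def
    using Vector_Spaces.linear_compose[OF l1 lp] Vector_Spaces.linear_compose[OF l2 lp]
      Vector_Spaces.linear_compose[OF l3 lp] by (auto simp: comp_def)
  then have eq: "(\<Sum>(x,y,z)\<leftarrow>xs. \<phi> (T x y z)) = (\<Sum>(x,y,z)\<leftarrow>ys. \<phi> (T x y z))"
    using te unfolding tensor3_eq_def by blast
  interpret linear sV "(*)" \<phi> by fact
  have "\<phi> (?L - ?R) = \<phi> ?L - \<phi> ?R" by (simp add: diff)
  also have "\<phi> ?L = (\<Sum>(x,y,z)\<leftarrow>xs. \<phi> (T x y z))"
    by (subst linear_sum_list[OF lp]) (simp add: split_def)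
  also have "\<phi> ?R = (\<Sum>(x,y,z)\<leftarrow>ys. \<phi> (T x y z))"
    by (subst linear_sum_list[OF lp]) (simp add: split_def)
  finally show False using nz eq by simp
qed

lemma sum_concat_R:
  "(\<Sum>(x,y,z)\<leftarrow>concat (map (\<lambda>(x,y). map (\<lambda>(u,v). (x,u,v)) (D y)) L). T x y z)
   = (\<Sum>(x,y)\<leftarrow>L. \<Sum>(u,v)\<leftarrow>D y. T x u v)"
  by (induction L) (auto simp: split_def comp_def)

lemma sum_concat_L:
  "(\<Sum>(x,y,z)\<leftarrow>concat (map (\<lambda>(x,y). map (\<lambda>(u,v). (u,v,y)) (D x)) L). T x y z)
   = (\<Sum>(x,y)\<leftarrow>L. \<Sum>(u,v)\<leftarrow>D x. T u v y)"
  by (induction L) (auto simp: split_def comp_def)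

lemma sum_list_zero_cong:
  assumes "\<And>x. x \<in> set L \<Longrightarrow> f x = 0"
  shows "sum_list (map f L) = 0"
  using assms by (induction L) auto

lemma anti_lemma:
  fixes sV :: "'k::field \<Rightarrow> 'v::ab_group_add \<Rightarrow> 'v"
    and sH :: "'k \<Rightarrow> 'h::ring_1 \<Rightarrow> 'h"
    and G :: "'h \<Rightarrow> 'h \<Rightarrow> 'a \<Rightarrow> 'v"
  assumes hopf: "hopf_algebra sH \<Delta> \<epsilon> S"
    and vs: "vector_space sV"
    and l1: "\<And>y k. k \<in> J \<Longrightarrow> Vector_Spaces.linear sH sV (\<lambda>x. G x y k)"
    and l2: "\<And>x k. k \<in> J \<Longrightarrow> Vector_Spaces.linear sH sV (\<lambda>y. G x y k)"
    and l3: "\<And>x y k. k \<in> J \<Longrightarrow> Vector_Spaces.linear sH sV (\<lambda>w. G x y (act w k))"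
    and mu: "\<And>x y w k. k \<in> J \<Longrightarrow> G x (y * w) k = G x y (act w k)"
    and cl: "\<And>h k. k \<in> J \<Longrightarrow> act h k \<in> J"
    and hyp: "\<And>h k. k \<in> J \<Longrightarrow> (\<Sum>(x,y)\<leftarrow>\<Delta> h. G x y k) = 0"
    and k: "k \<in> J"
  shows "G h 1 k = 0"
proof -
  have counit: "(\<Sum>(x,y)\<leftarrow>\<Delta> h. sH (\<epsilon> y) x) = h" for h
    using hopf unfolding hopf_algebra_def by blast
  have antip: "(\<Sum>(x,y)\<leftarrow>\<Delta> h. x * S y) = sH (\<epsilon> h) 1" for h
    using hopf unfolding hopf_algebra_def by blast
  have coass: "tensor3_eq sH
            (concat (map (\<lambda>(x,y). map (\<lambda>(u,v). (u,v,y)) (\<Delta> x)) (\<Delta> h)))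
            (concat (map (\<lambda>(x,y). map (\<lambda>(u,v). (x,u,v)) (\<Delta> y)) (\<Delta> h)))" for h
    using hopf unfolding hopf_algebra_def by blast
  have Slin: "Vector_Spaces.linear sH sH S"
    using hopf unfolding hopf_algebra_def by blast
  define T where "T x u v = G x u (act (S v) k)" for x u v
  have "G h 1 k = (\<lambda>x. G x 1 k) (\<Sum>(a,b)\<leftarrow>\<Delta> h. sH (\<epsilon> b) a)"
    using counit[of h] by simp
  also have "\<dots> = (\<Sum>(a,b)\<leftarrow>\<Delta> h. G (sH (\<epsilon> b) a) 1 k)"
    by (subst linear_sum_list[OF l1[OF k]]) (simp add: split_def)
  also have "\<dots> = (\<Sum>(a,b)\<leftarrow>\<Delta> h. G a (sH (\<epsilon> b) 1) k)"
  proof -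
    have "G (sH c a) 1 k = G a (sH c 1) k" for a c
    proof -
      interpret L1: linear sH sV "\<lambda>x. G x 1 k" by (rule l1[OF k])
      interpret L2: linear sH sV "\<lambda>y. G a y k" by (rule l2[OF k])
      show ?thesis using L1.scale[of c a] L2.scale[of c 1] by simp
    qed
    then show ?thesis by (simp add: split_def)
  qed
  also have "\<dots> = (\<Sum>(a,b)\<leftarrow>\<Delta> h. \<Sum>(c,d)\<leftarrow>\<Delta> b. T a c d)"
  proof -
    have "G a (sH (\<epsilon> b) 1) k = (\<Sum>(c,d)\<leftarrow>\<Delta> b. T a c d)" for a b
    proof -
      have "G a (sH (\<epsilon> b) 1) k = (\<lambda>y. G a y k) (\<Sum>(c,d)\<leftarrow>\<Delta> b. c * S d)"
        using antip[of b] by simp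
      also have "\<dots> = (\<Sum>(c,d)\<leftarrow>\<Delta> b. G a (c * S d) k)"
        by (subst linear_sum_list[OF l2[OF k]]) (simp add: split_def)
      also have "\<dots> = (\<Sum>(c,d)\<leftarrow>\<Delta> b. T a c d)"
        by (simp add: T_def mu[OF k] split_def)
      finally show ?thesis .
    qed
    then show ?thesis by (simp add: split_def)
  qed
  also have "\<dots> = (\<Sum>(x,y,z)\<leftarrow>concat (map (\<lambda>(x,y). map (\<lambda>(u,v). (x,u,v)) (\<Delta> y)) (\<Delta> h)). T x y z)"
    by (rule sum_concat_R[symmetric])
  also have "\<dots> = (\<Sum>(x,y,z)\<leftarrow>concat (map (\<lambda>(x,y). map (\<lambda>(u,v). (u,v,y)) (\<Delta> x)) (\<Delta> h)). T x y z)"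
  proof (rule tensor3_transfer[OF vs coass[of h], symmetric])
    fix x y z
    have kz: "act (S z) k \<in> J" by (rule cl[OF k])
    show "Vector_Spaces.linear sH sV (\<lambda>x. T x y z)" unfolding T_def by (rule l1[OF kz])
    show "Vector_Spaces.linear sH sV (\<lambda>y. T x y z)" unfolding T_def by (rule l2[OF kz])
    show "Vector_Spaces.linear sH sV (\<lambda>z. T x y z)" unfolding T_def
      using Vector_Spaces.linear_compose[OF Slin l3[OF k, of x y]] by (simp add: comp_def)
  qed
  also have "\<dots> = (\<Sum>(x,y)\<leftarrow>\<Delta> h. \<Sum>(u,v)\<leftarrow>\<Delta> x. T u v y)"
    by (rule sum_concat_L)
  also have "\<dots> = 0"
  proof (rule sum_list_zero_cong)
    fix p assume "p \<in> set (\<Delta> h)"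
    obtain x y where p: "p = (x,y)" by fastforce
    have "(\<Sum>(u,v)\<leftarrow>\<Delta> x. T u v y) = 0" unfolding T_def by (rule hyp[OF cl[OF k]])
    then show "(\<lambda>(x,y). \<Sum>(u,v)\<leftarrow>\<Delta> x. T u v y) p = 0" by (simp add: p)
  qed
  finally show ?thesis .
qed



lemma sub_struct_simps[simp]:
  "carrier (subring_struct C) = C" "monoid.mult (subring_struct C) = (*)" "monoid.one (subring_struct C) = 1"
  "ring.zero (subring_struct C) = 0" "ring.add (subring_struct C) = (+)"
  by (simp_all add: subring_struct_def)
lemma cring_sub:
  fixes C :: "'q::ring_1 set"
  assumes add: "\<And>x y. x \<in> C \<Longrightarrow> y \<in> C \<Longrightarrow> x + y \<in> C"
    and mul: "\<And>x y. x \<in> C \<Longrightarrow> y \<in> C \<Longrightarrow> x * y \<in> C"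
    and neg: "\<And>x. x \<in> C \<Longrightarrow> - x \<in> C"
    and z: "0 \<in> C" and o: "1 \<in> C"
    and com: "\<And>x y. x \<in> C \<Longrightarrow> y \<in> C \<Longrightarrow> x * y = y * x"
  shows "cring (subring_struct C)"
proof (rule cringI)
  show "abelian_group (subring_struct C)"
  proof (rule abelian_groupI)
    fix x assume "x \<in> carrier (subring_struct C)"
    then show "\<exists>y\<in>carrier (subring_struct C). y \<oplus>\<^bsub>subring_struct C\<^esub> x = \<zero>\<^bsub>subring_struct C\<^esub>"
      using neg by (intro bexI[of _ "- x"]) auto
  qed (auto simp: add z add.assoc add.commute)
  show "comm_monoid (subring_struct C)"
    by (rule comm_monoidI) (auto simp: mul o mult.assoc com)
qed (auto simp: distrib_right)
lemma ideal_prod_zero: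
  assumes "\<And>x y. x \<in> I \<Longrightarrow> y \<in> J \<Longrightarrow> x * y = 0"
  shows "ideal_prod I J = {0}"
proof -
  have "(\<Sum>(x,y)\<leftarrow>ps. x * y) = 0" if "set ps \<subseteq> I \<times> J" for ps :: "('a \<times> 'a) list"
    using that assms by (induction ps) auto
  moreover have "(0::'a) \<in> ideal_prod I J"
    unfolding ideal_prod_def by (rule CollectI, rule exI[of _ "[]"]) simp
  ultimately show ?thesis unfolding ideal_prod_def by blast
qed
lemma ideal_prod_single:
  assumes "x \<in> I" "y \<in> J" shows "x * y \<in> ideal_prod I J"
  unfolding ideal_prod_def using assms by (intro CollectI exI[of _ "[(x,y)]"]) auto
lemma dense_superset:
  assumes "I \<in> dense_ideals" "I \<subseteq> J" "ring_ideal J"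
  shows "J \<in> dense_ideals"
  using assms unfolding dense_ideals_def by blast
lemma dense_UNIV: "(UNIV :: 'a::ring_1 set) \<in> dense_ideals"
  unfolding dense_ideals_def ring_ideal_def by (auto dest: spec[of _ 1])
lemma dense_nonzero:
  assumes "I \<in> dense_ideals" shows "\<exists>x\<in>I. x \<noteq> 0"
proof (rule ccontr)
  assume "\<not> ?thesis"
  then have "\<forall>i\<in>I. (1::'a) * i = 0" by auto
  moreover have "\<forall>x. (\<forall>i\<in>I. x * i = 0) \<longrightarrow> x = 0" using assms by (simp add: dense_ideals_def)
  ultimately have "(1::'a) = 0" by blast
  then show False by simp
qed

lemma ideal_mulL: "ring_ideal I \<Longrightarrow> x \<in> I \<Longrightarrow> r * x \<in> I"
  unfolding ring_ideal_def by blast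
lemma ideal_mulR: "ring_ideal I \<Longrightarrow> x \<in> I \<Longrightarrow> x * r \<in> I"
  unfolding ring_ideal_def by blast
lemma ideal_add: "ring_ideal I \<Longrightarrow> x \<in> I \<Longrightarrow> y \<in> I \<Longrightarrow> x + y \<in> I"
  unfolding ring_ideal_def by blast
lemma ideal_neg: "ring_ideal I \<Longrightarrow> x \<in> I \<Longrightarrow> - x \<in> I"
  unfolding ring_ideal_def by blast
lemma ideal_zero: "ring_ideal I \<Longrightarrow> 0 \<in> I"
  unfolding ring_ideal_def by blast
lemma denseD: "I \<in> dense_ideals \<Longrightarrow> ring_ideal I"
  "I \<in> dense_ideals \<Longrightarrow> (\<And>i. i \<in> I \<Longrightarrow> x * i = 0) \<Longrightarrow> x = 0"
  "I \<in> dense_ideals \<Longrightarrow> (\<And>i. i \<in> I \<Longrightarrow> i * x = 0) \<Longrightarrow> x = 0"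
  unfolding dense_ideals_def by blast+
lemma denseI: "ring_ideal I \<Longrightarrow> (\<And>x. (\<And>i. i \<in> I \<Longrightarrow> x * i = 0) \<Longrightarrow> x = 0) \<Longrightarrow>
   (\<And>x. (\<And>i. i \<in> I \<Longrightarrow> i * x = 0) \<Longrightarrow> x = 0) \<Longrightarrow> I \<in> dense_ideals"
  unfolding dense_ideals_def by blast

lemma dense_int:
  assumes I: "I \<in> dense_ideals" and J: "J \<in> dense_ideals"
  shows "I \<inter> J \<in> dense_ideals"
proof (rule denseI)
  have rI: "ring_ideal I" and rJ: "ring_ideal J" using I J by (auto dest: denseD)
  show "ring_ideal (I \<inter> J)" using rI rJ unfolding ring_ideal_def by auto
  show "x = 0" if h: "\<And>i. i \<in> I \<inter> J \<Longrightarrow> x * i = 0" for x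
  proof -
    have "x * i = 0" if "i \<in> I" for i
    proof (rule denseD(2)[OF J])
      fix j assume "j \<in> J"
      then have "i * j \<in> I \<inter> J" using ideal_mulR[OF rI that] ideal_mulL[OF rJ] by blast
      then show "x * i * j = 0" using h by (simp add: mult.assoc)
    qed
    then show ?thesis using denseD(2)[OF I] by blast
  qed
  show "x = 0" if h: "\<And>i. i \<in> I \<inter> J \<Longrightarrow> i * x = 0" for x
  proof -
    have "j * x = 0" if "j \<in> J" for j
    proof (rule denseD(3)[OF I])
      fix i assume "i \<in> I"
      then have "i * j \<in> I \<inter> J" using ideal_mulL[OF rJ that] ideal_mulR[OF rI] by blast
      then show "i * (j * x) = 0" using h by (simp flip: mult.assoc)
    qed
    then show ?thesis using denseD(3)[OF J] by blast
  qed
qed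




lemma linI: "vector_space s1 \<Longrightarrow> vector_space s2 \<Longrightarrow> (\<And>x y. f (x + y) = f x + f y) \<Longrightarrow>
   (\<And>c x. f (s1 c x) = s2 c (f x)) \<Longrightarrow> Vector_Spaces.linear s1 s2 f"
  unfolding linear_iff by blast

lemma linD: assumes "Vector_Spaces.linear s1 s2 f"
  shows "vector_space s1" "vector_space s2" "f (x + y) = f x + f y" "f (s1 c x) = s2 c (f x)"
  using assms unfolding linear_iff by blast+

lemma lin_diff:
  assumes f: "Vector_Spaces.linear s1 s2 f" and g: "Vector_Spaces.linear s1 s2 g"
  shows "Vector_Spaces.linear s1 s2 (\<lambda>x. f x - g x)"
proof (rule linI)
  show v1: "vector_space s1" and v2: "vector_space s2" using linD[OF f] by auto
  show "f (x + y) - g (x + y) = f x - g x + (f y - g y)" for x y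
    using linD(3)[OF f] linD(3)[OF g] by (simp add: algebra_simps)
  show "f (s1 c x) - g (s1 c x) = s2 c (f x - g x)" for c x
  proof -
    interpret v2: vector_space s2 by fact
    show ?thesis using linD(4)[OF f] linD(4)[OF g] v2.scale_right_diff_distrib by simp
  qed
qed

locale HQ =
  fixes sH :: "'k::field \<Rightarrow> 'h::ring_1 \<Rightarrow> 'h"
    and \<Delta> :: "'h \<Rightarrow> ('h \<times> 'h) list"
    and \<epsilon> :: "'h \<Rightarrow> 'k"
    and S :: "'h \<Rightarrow> 'h"
    and sA :: "'k \<Rightarrow> 'a::ring_1 \<Rightarrow> 'a"
    and act :: "'h \<Rightarrow> 'a \<Rightarrow> 'a"
    and \<iota> :: "'a \<Rightarrow> 'q::ring_1"
  assumes hopf: "hopf_algebra sH \<Delta> \<epsilon> S"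
    and ma: "module_algebra sH \<Delta> \<epsilon> sA act"
    and sq: "sym_ring_of_quotients \<iota>"
begin

lemmas sqs = sq[unfolded sym_ring_of_quotients_def]
lemma \<iota>_inj: "\<iota> x = \<iota> y \<longleftrightarrow> x = y"
  using sqs[THEN conjunct1] by (simp add: inj_eq)
lemma \<iota>_add[simp]: "\<iota> (x + y) = \<iota> x + \<iota> y"
  using sqs[THEN conjunct2, THEN conjunct1] by blast
lemma \<iota>_mul[simp]: "\<iota> (x * y) = \<iota> x * \<iota> y"
  using sqs[THEN conjunct2, THEN conjunct2, THEN conjunct1] by blast
lemma \<iota>_one[simp]: "\<iota> 1 = 1"
  using sqs[THEN conjunct2, THEN conjunct2, THEN conjunct2, THEN conjunct1] .
lemma \<iota>_zero[simp]: "\<iota> 0 = 0"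
  using \<iota>_add[of 0 0] by simp
lemma \<iota>_neg[simp]: "\<iota> (- x) = - \<iota> x"
proof -
  have "\<iota> x + \<iota> (- x) = 0" using \<iota>_add[of x "- x", symmetric] by simp
  then show ?thesis by (simp add: add_eq_0_iff)
qed
lemma \<iota>_diff[simp]: "\<iota> (x - y) = \<iota> x - \<iota> y"
  using \<iota>_add[of x "- y"] by simp
lemma \<iota>_eq0[simp]: "\<iota> x = 0 \<longleftrightarrow> x = 0"
  using \<iota>_inj[of x 0] by simp

lemmas sq5 = sqs[THEN conjunct2, THEN conjunct2, THEN conjunct2, THEN conjunct2]
lemma ax_ex: "\<exists>I\<in>dense_ideals. \<forall>x\<in>I. q * \<iota> x \<in> range \<iota> \<and> \<iota> x * q \<in> range \<iota>"
  using sq5[THEN conjunct1] by (rule spec)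
lemma ax_l: "I \<in> dense_ideals \<Longrightarrow> (\<And>x. x \<in> I \<Longrightarrow> q * \<iota> x = 0) \<Longrightarrow> q = 0"
  using sq5[THEN conjunct2, THEN conjunct1] by blast
lemma ax_r: "I \<in> dense_ideals \<Longrightarrow> (\<And>x. x \<in> I \<Longrightarrow> \<iota> x * q = 0) \<Longrightarrow> q = 0"
  using sq5[THEN conjunct2, THEN conjunct2, THEN conjunct1] by blast
lemma ax_ext: "I \<in> dense_ideals \<Longrightarrow>
        (\<forall>x\<in>I. \<forall>y\<in>I. f (x + y) = f x + f y \<and> g (x + y) = g x + g y) \<Longrightarrow>
        (\<forall>x\<in>I. \<forall>r. f (x * r) = f x * r \<and> g (r * x) = r * g x) \<Longrightarrow>
        (\<forall>x\<in>I. \<forall>y\<in>I. x * f y = g x * y) \<Longrightarrow>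
        (\<exists>q. \<forall>x\<in>I. q * \<iota> x = \<iota> (f x) \<and> \<iota> x * q = \<iota> (g x))"
proof -
  assume a: "I \<in> dense_ideals"
    "(\<forall>x\<in>I. \<forall>y\<in>I. f (x + y) = f x + f y \<and> g (x + y) = g x + g y)"
    "(\<forall>x\<in>I. \<forall>r. f (x * r) = f x * r \<and> g (r * x) = r * g x)"
    "(\<forall>x\<in>I. \<forall>y\<in>I. x * f y = g x * y)"
  have "\<forall>I\<in>dense_ideals. \<forall>f g.
        (\<forall>x\<in>I. \<forall>y\<in>I. f (x + y) = f x + f y \<and> g (x + y) = g x + g y) \<and>
        (\<forall>x\<in>I. \<forall>r. f (x * r) = f x * r \<and> g (r * x) = r * g x) \<and>
        (\<forall>x\<in>I. \<forall>y\<in>I. x * f y = g x * y) \<longrightarrow>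
        (\<exists>q. \<forall>x\<in>I. q * \<iota> x = \<iota> (f x) \<and> \<iota> x * q = \<iota> (g x))"
    using sq5[THEN conjunct2, THEN conjunct2, THEN conjunct2] .
  then show ?thesis using a by blast
qed

lemmas mas = ma[unfolded module_algebra_def]
lemmas kA = mas[THEN conjunct1, unfolded k_algebra_def]
lemma vsA: "vector_space sA" using kA[THEN conjunct1] .
lemma vsH: "vector_space sH"
  using hopf[unfolded hopf_algebra_def, THEN conjunct1, unfolded k_algebra_def, THEN conjunct1] .
lemma sA_mulL: "sA c (x * y) = sA c x * y" using kA[THEN conjunct2] by blast
lemma sA_mulR: "sA c (x * y) = x * sA c y" using kA[THEN conjunct2] by blast
lemma sA_one: "sA c x = sA c 1 * x" using sA_mulL[of c 1 x] by simp

lemma act_lin: "Vector_Spaces.linear sA sA (act h)"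
  using mas[THEN conjunct2, THEN conjunct1] by blast
lemma act_linH: "Vector_Spaces.linear sH sA (\<lambda>h. act h a)"
  using mas[THEN conjunct2, THEN conjunct2, THEN conjunct1] by blast
lemmas mas4 = mas[THEN conjunct2, THEN conjunct2, THEN conjunct2]
lemma act_add[simp]: "act h (x + y) = act h x + act h y" using linD(3)[OF act_lin] .
lemma act_scale: "act h (sA c x) = sA c (act h x)" using linD(4)[OF act_lin] .
lemma act_zero[simp]: "act h 0 = 0" using act_add[of h 0 0] by simp
lemma act_neg[simp]: "act h (- x) = - act h x"
proof -
  have "act h x + act h (- x) = 0" using act_add[of h x "- x", symmetric] by simp
  then show ?thesis by (simp add: add_eq_0_iff)
qed
lemma act_diff[simp]: "act h (x - y) = act h x - act h y"
  using act_add[of h x "- y"] by simp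
lemma act_hadd: "act (g + h) a = act g a + act h a" using linD(3)[OF act_linH] .
lemma act_hscale: "act (sH c h) a = sA c (act h a)" using linD(4)[OF act_linH] .
lemma act_one[simp]: "act 1 a = a" using mas4[THEN conjunct1] by blast
lemma act_mul: "act (g * h) a = act g (act h a)" using mas4[THEN conjunct2, THEN conjunct1] by blast
lemma act_prod: "act h (a * b) = (\<Sum>(x,y)\<leftarrow>\<Delta> h. act x a * act y b)"
  using mas4[THEN conjunct2, THEN conjunct2, THEN conjunct1] by blast

lemma lin_mulR: "Vector_Spaces.linear sA sA (\<lambda>z. z * K)"
  by (rule linI[OF vsA vsA]) (auto simp: distrib_right sA_mulL)
lemma lin_mulL: "Vector_Spaces.linear sA sA (\<lambda>z. K * z)"
  by (rule linI[OF vsA vsA]) (auto simp: distrib_left sA_mulR)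

lemma lin_comp: "Vector_Spaces.linear s1 s2 f \<Longrightarrow> Vector_Spaces.linear s2 s3 g \<Longrightarrow>
   Vector_Spaces.linear s1 s3 (\<lambda>x. g (f x))"
  using Vector_Spaces.linear_compose[of s1 s2 f s3 g] by (simp add: comp_def)

abbreviation cen :: "'q \<Rightarrow> bool" where "cen q \<equiv> q \<in> extended_center"

lemma cenD: "cen q \<Longrightarrow> q * p = p * q" unfolding extended_center_def by blast

definition good :: "'q \<Rightarrow> 'a set \<Rightarrow> bool" where
  "good q J \<longleftrightarrow> J \<in> dense_ideals \<and> (\<forall>h. \<forall>k\<in>J. act h k \<in> J) \<and>
     (\<forall>k\<in>J. \<exists>b. \<iota> b = q * \<iota> k \<and> (\<forall>h. \<iota> (act h b) = q * \<iota> (act h k)))"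

lemma core:
  assumes cq: "cen q" and gd: "good q J" and de: "\<iota> e = q * \<iota> d"
  shows "\<iota> (act h e) = q * \<iota> (act h d)"
proof -
  have Jd: "J \<in> dense_ideals" and cl: "\<And>h k. k \<in> J \<Longrightarrow> act h k \<in> J"
    and ex: "\<And>k. k \<in> J \<Longrightarrow> \<exists>b. \<iota> b = q * \<iota> k \<and> (\<forall>h. \<iota> (act h b) = q * \<iota> (act h k))"
    using gd unfolding good_def by blast+
  have rJ: "ring_ideal J" using denseD(1)[OF Jd] .
  define c where "c k = (SOME b. \<iota> b = q * \<iota> k \<and> (\<forall>h. \<iota> (act h b) = q * \<iota> (act h k)))" for k
  have cspec: "\<iota> (c k) = q * \<iota> k" "\<iota> (act h (c k)) = q * \<iota> (act h k)" if "k \<in> J" for k h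
    using someI_ex[OF ex[OF that]] unfolding c_def by blast+
  have c_add: "c (k1 + k2) = c k1 + c k2" if "k1 \<in> J" "k2 \<in> J" for k1 k2
  proof -
    have "k1 + k2 \<in> J" using ideal_add[OF rJ that] .
    then have "\<iota> (c (k1 + k2)) = \<iota> (c k1 + c k2)"
      using cspec(1) that by (simp add: distrib_left)
    then show ?thesis using \<iota>_inj by blast
  qed
  have c_scale: "c (sA t k) = sA t (c k)" if "k \<in> J" for k t
  proof -
    have "sA t k \<in> J" using ideal_mulL[OF rJ that, of "sA t 1"] sA_one[of t k] by simp
    then have "\<iota> (c (sA t k)) = q * \<iota> (sA t 1 * k)" using cspec(1) sA_one[of t k] by simp
    also have "\<dots> = \<iota> (sA t 1) * (q * \<iota> k)" using cenD[OF cq, of "\<iota> (sA t 1)"]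
      by (simp add: mult.assoc[symmetric])
    also have "\<dots> = \<iota> (sA t (c k))" using cspec(1)[OF that] sA_one[of t "c k"] by simp
    finally show ?thesis using \<iota>_inj by blast
  qed
  have c_act: "c (act h k) = act h (c k)" if "k \<in> J" for k h
    using cspec[OF that] cspec(1)[OF cl[OF that]] \<iota>_inj by metis
  have lin_c: "Vector_Spaces.linear sH sA (\<lambda>w. c (f w))"
    if f: "Vector_Spaces.linear sH sA f" and fJ: "\<And>w. f w \<in> J" for f
    by (rule linI[OF vsH vsA]) (simp_all add: linD(3,4)[OF f] c_add c_scale fJ)
  define G where "G x y k = act x e * act y k - act x d * c (act y k)" for x y k
  have L1: "Vector_Spaces.linear sH sA (\<lambda>x. G x y k)" if "k \<in> J" for y k
      unfolding G_def
      by (intro lin_diff lin_comp[OF act_linH lin_mulR])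
  have L2: "Vector_Spaces.linear sH sA (\<lambda>y. G x y k)" if "k \<in> J" for x k
      unfolding G_def
      by (intro lin_diff lin_comp[OF act_linH lin_mulL] lin_comp[OF _ lin_mulL] lin_c act_linH cl that)
  have L3: "Vector_Spaces.linear sH sA (\<lambda>w. G x y (act w k))" if "k \<in> J" for x y k
      unfolding G_def
      by (intro lin_diff lin_comp[OF lin_comp[OF act_linH act_lin] lin_mulL] lin_comp[OF _ lin_mulL]
          lin_c lin_comp[OF act_linH act_lin] cl that)
  have MU: "G x (y * w) k = G x y (act w k)" if "k \<in> J" for x y w k
      unfolding G_def by (simp add: act_mul)
  have HY: "(\<Sum>(x,y)\<leftarrow>\<Delta> h. G x y k) = 0" if kJ: "k \<in> J" for h k
    proof -
      have "(\<Sum>(x,y)\<leftarrow>\<Delta> h. G x y k) =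
            (\<Sum>(x,y)\<leftarrow>\<Delta> h. act x e * act y k - act x d * act y (c k))"
        unfolding G_def using c_act[OF kJ] by (simp add: split_def)
      also have "\<dots> = (\<Sum>(x,y)\<leftarrow>\<Delta> h. act x e * act y k) - (\<Sum>(x,y)\<leftarrow>\<Delta> h. act x d * act y (c k))"
        by (simp add: split_def sum_list_subtractf)
      also have "\<dots> = act h (e * k) - act h (d * c k)" by (simp add: act_prod)
      also have "e * k = d * c k"
      proof -
        have "\<iota> (e * k) = \<iota> (d * c k)"
          using de cspec(1)[OF kJ] cenD[OF cq, of "\<iota> d"] by (simp add: mult.assoc)
        then show ?thesis using \<iota>_inj by blast
      qed
      finally show ?thesis by simp
    qed
  have "G h 1 k = 0" if k: "k \<in> J" for k
    by (rule anti_lemma[OF hopf vsA L1 L2 L3 MU cl HY k])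
  then have eq: "act h e * k = act h d * c k" if "k \<in> J" for k
    using that unfolding G_def by simp
  have "\<iota> (act h e) - q * \<iota> (act h d) = 0"
  proof (rule ax_l[OF Jd])
    fix k assume k: "k \<in> J"
    have "\<iota> (act h e) * \<iota> k = \<iota> (act h d) * (q * \<iota> k)"
      using arg_cong[OF eq[OF k], of \<iota>] cspec(1)[OF k] by simp
    also have "\<dots> = q * \<iota> (act h d) * \<iota> k" using cenD[OF cq, of "\<iota> (act h d)"]
      by (simp add: mult.assoc[symmetric])
    finally show "(\<iota> (act h e) - q * \<iota> (act h d)) * \<iota> k = 0" by (simp add: algebra_simps)
  qed
  then show ?thesis by simp
qed


lemma D_cen:
  assumes cq: "cen q" shows "D_set \<iota> q = {a. \<exists>b. \<iota> b = q * \<iota> a}"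
proof (rule Set.set_eqI, rule iffI)
  fix a assume "a \<in> D_set \<iota> q"
  then have "q * \<iota> 1 * \<iota> a \<in> range \<iota>" unfolding D_set_def by blast
  then show "a \<in> {a. \<exists>b. \<iota> b = q * \<iota> a}" by (auto simp: image_iff)
next
  fix a assume "a \<in> {a. \<exists>b. \<iota> b = q * \<iota> a}"
  then obtain b where b: "\<iota> b = q * \<iota> a" by blast
  have "q * \<iota> r * \<iota> a = \<iota> (r * b)" for r
    using cenD[OF cq, of "\<iota> r"] b by (simp add: mult.assoc)
  moreover have "\<iota> a * \<iota> r * q = \<iota> (b * r)" for r
    using cenD[OF cq, of "\<iota> a * \<iota> r"] b by (simp add: mult.assoc)
  ultimately show "a \<in> D_set \<iota> q" unfolding D_set_def by (simp del: \<iota>_mul add: rangeI)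
qed

lemma D_dense:
  assumes cq: "cen q" shows "D_set \<iota> q \<in> dense_ideals"
proof -
  obtain I where I: "I \<in> dense_ideals" and Ix: "\<And>x. x \<in> I \<Longrightarrow> q * \<iota> x \<in> range \<iota>"
    using ax_ex[of q] by blast
  have sub: "I \<subseteq> D_set \<iota> q" unfolding D_cen[OF cq] using Ix by (force simp: image_iff)
  have "ring_ideal (D_set \<iota> q)"
    unfolding D_cen[OF cq] ring_ideal_def
  proof (intro conjI ballI allI)
    show "0 \<in> {a. \<exists>b. \<iota> b = q * \<iota> a}" by (auto intro: exI[of _ 0])
    fix x assume "x \<in> {a. \<exists>b. \<iota> b = q * \<iota> a}"
    then obtain b where b: "\<iota> b = q * \<iota> x" by blast
    show "- x \<in> {a. \<exists>b. \<iota> b = q * \<iota> a}" using b by (auto intro!: exI[of _ "- b"])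
    fix r
    show "r * x \<in> {a. \<exists>b. \<iota> b = q * \<iota> a}"
      using b cenD[OF cq, of "\<iota> r"] by (auto intro!: exI[of _ "r * b"] simp: mult.assoc[symmetric])
    show "x * r \<in> {a. \<exists>b. \<iota> b = q * \<iota> a}"
      using b by (auto intro!: exI[of _ "b * r"] simp: mult.assoc)
  next
    fix x y assume "x \<in> {a. \<exists>b. \<iota> b = q * \<iota> a}" "y \<in> {a. \<exists>b. \<iota> b = q * \<iota> a}"
    then obtain b c where "\<iota> b = q * \<iota> x" "\<iota> c = q * \<iota> y" by blast
    then show "x + y \<in> {a. \<exists>b. \<iota> b = q * \<iota> a}"
      by (auto intro!: exI[of _ "b + c"] simp: distrib_left)
  qed
  then show ?thesis using dense_superset[OF I sub] by blast
qed

lemma QH_from_good: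
  assumes cq: "cen q" and gd: "good q J" shows "q \<in> QH act \<iota>"
  unfolding QH_def
proof (intro CollectI allI ballI conjI impI)
  fix h d e
  show "\<iota> e = q * \<iota> d \<Longrightarrow> \<iota> (act h e) = q * \<iota> (act h d)" by (rule core[OF cq gd])
  show "\<iota> e = \<iota> d * q \<Longrightarrow> \<iota> (act h e) = \<iota> (act h d) * q"
    using core[OF cq gd, of e d h] cenD[OF cq, of "\<iota> d"] cenD[OF cq, of "\<iota> (act h d)"] by simp
qed

lemma good_CH: "cen q \<Longrightarrow> good q J \<Longrightarrow> q \<in> extended_H_center act \<iota>"
  unfolding extended_H_center_def using QH_from_good by blast

lemma CH_good:
  assumes q: "q \<in> extended_H_center act \<iota>"
  shows "cen q" "good q (D_set \<iota> q)"
proof -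
  show cq: "cen q" using q unfolding extended_H_center_def by blast
  have qh: "q \<in> QH act \<iota>" using q unfolding extended_H_center_def by blast
  have tr: "\<iota> (act h b) = q * \<iota> (act h k)" if "k \<in> D_set \<iota> q" "\<iota> b = q * \<iota> k" for h k b
    using qh that unfolding QH_def by blast
  show "good q (D_set \<iota> q)" unfolding good_def
  proof (intro conjI allI ballI)
    show "D_set \<iota> q \<in> dense_ideals" by (rule D_dense[OF cq])
  next
    fix h k assume k: "k \<in> D_set \<iota> q"
    then obtain b where b: "\<iota> b = q * \<iota> k" unfolding D_cen[OF cq] by blast
    show "act h k \<in> D_set \<iota> q" unfolding D_cen[OF cq] using tr[OF k b] by blast
  next
    fix k assume k: "k \<in> D_set \<iota> q"
    then obtain b where b: "\<iota> b = q * \<iota> k" unfolding D_cen[OF cq] by blast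
    then show "\<exists>b. \<iota> b = q * \<iota> k \<and> (\<forall>h. \<iota> (act h b) = q * \<iota> (act h k))"
      using tr[OF k b] by blast
  qed
qed

lemma CH_tr: "q \<in> extended_H_center act \<iota> \<Longrightarrow> \<iota> e = q * \<iota> d \<Longrightarrow> \<iota> (act h e) = q * \<iota> (act h d)"
  using core CH_good by blast

lemma CH_zero: "0 \<in> extended_H_center act \<iota>"
proof (rule good_CH)
  show "cen 0" unfolding extended_center_def by simp
  show "good 0 UNIV" unfolding good_def using dense_UNIV by (auto intro: exI[of _ 0])
qed

lemma CH_one: "1 \<in> extended_H_center act \<iota>"
proof (rule good_CH)
  show "cen 1" unfolding extended_center_def by simp
  show "good 1 UNIV" unfolding good_def using dense_UNIV by auto
qed

lemma CH_add:
  assumes q1: "q1 \<in> extended_H_center act \<iota>" and q2: "q2 \<in> extended_H_center act \<iota>"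
  shows "q1 + q2 \<in> extended_H_center act \<iota>"
proof (rule good_CH)
  have c1: "cen q1" and g1: "good q1 (D_set \<iota> q1)" using CH_good[OF q1] by auto
  have c2: "cen q2" and g2: "good q2 (D_set \<iota> q2)" using CH_good[OF q2] by auto
  show "cen (q1 + q2)" using c1 c2 unfolding extended_center_def by (simp add: algebra_simps)
  show "good (q1 + q2) (D_set \<iota> q1 \<inter> D_set \<iota> q2)" unfolding good_def
  proof (intro conjI allI ballI)
    show "D_set \<iota> q1 \<inter> D_set \<iota> q2 \<in> dense_ideals" using g1 g2 dense_int unfolding good_def by blast
    show "act h k \<in> D_set \<iota> q1 \<inter> D_set \<iota> q2" if "k \<in> D_set \<iota> q1 \<inter> D_set \<iota> q2" for h k
      using that g1 g2 unfolding good_def by blast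
    fix k assume k: "k \<in> D_set \<iota> q1 \<inter> D_set \<iota> q2"
    obtain b1 where b1: "\<iota> b1 = q1 * \<iota> k" using k unfolding D_cen[OF c1] by blast
    obtain b2 where b2: "\<iota> b2 = q2 * \<iota> k" using k unfolding D_cen[OF c2] by blast
    show "\<exists>b. \<iota> b = (q1 + q2) * \<iota> k \<and> (\<forall>h. \<iota> (act h b) = (q1 + q2) * \<iota> (act h k))"
      using b1 b2 CH_tr[OF q1 b1] CH_tr[OF q2 b2]
      by (intro exI[of _ "b1 + b2"]) (simp add: distrib_right)
  qed
qed

lemma CH_neg:
  assumes q1: "q1 \<in> extended_H_center act \<iota>"
  shows "- q1 \<in> extended_H_center act \<iota>"
proof (rule good_CH)
  have c1: "cen q1" and g1: "good q1 (D_set \<iota> q1)" using CH_good[OF q1] by auto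
  show "cen (- q1)" using c1 unfolding extended_center_def by simp
  show "good (- q1) (D_set \<iota> q1)" unfolding good_def
  proof (intro conjI allI ballI)
    show "D_set \<iota> q1 \<in> dense_ideals" using g1 unfolding good_def by blast
    show "act h k \<in> D_set \<iota> q1" if "k \<in> D_set \<iota> q1" for h k
      using that g1 unfolding good_def by blast
    fix k assume k: "k \<in> D_set \<iota> q1"
    obtain b1 where b1: "\<iota> b1 = q1 * \<iota> k" using k unfolding D_cen[OF c1] by blast
    show "\<exists>b. \<iota> b = (- q1) * \<iota> k \<and> (\<forall>h. \<iota> (act h b) = (- q1) * \<iota> (act h k))"
      using b1 CH_tr[OF q1 b1] by (intro exI[of _ "- b1"]) simp
  qed
qed


lemma CH_mul:
  assumes q1: "q1 \<in> extended_H_center act \<iota>" and q2: "q2 \<in> extended_H_center act \<iota>"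
  shows "q1 * q2 \<in> extended_H_center act \<iota>"
proof (rule good_CH)
  have c1: "cen q1" and g1: "good q1 (D_set \<iota> q1)" using CH_good[OF q1] by auto
  have c2: "cen q2" and g2: "good q2 (D_set \<iota> q2)" using CH_good[OF q2] by auto
  define D1 where "D1 = D_set \<iota> q1"
  define D2 where "D2 = D_set \<iota> q2"
  have d1: "D1 \<in> dense_ideals" and d2: "D2 \<in> dense_ideals"
    using g1 g2 unfolding good_def D1_def D2_def by auto
  have r1: "ring_ideal D1" and r2: "ring_ideal D2" using denseD(1) d1 d2 by auto
  have d12: "D1 \<inter> D2 \<in> dense_ideals" using dense_int[OF d1 d2] .
  have D2e: "\<exists>b. \<iota> b = q2 * \<iota> k" if "k \<in> D2" for k using that unfolding D2_def D_cen[OF c2] by blast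
  have D1e: "\<exists>b. \<iota> b = q1 * \<iota> k" if "k \<in> D1" for k using that unfolding D1_def D_cen[OF c1] by blast
  have cl1: "act h k \<in> D1" if "k \<in> D1" for h k using that g1 unfolding good_def D1_def by blast
  have cl2: "act h k \<in> D2" if "k \<in> D2" for h k using that g2 unfolding good_def D2_def by blast
  define J where "J = {k \<in> D2. \<exists>b\<in>D1. \<iota> b = q2 * \<iota> k}"
  show "cen (q1 * q2)" unfolding extended_center_def
  proof (intro CollectI allI)
    fix p
    have "q1 * q2 * p = q1 * (p * q2)" using cenD[OF c2, of p] by (simp add: mult.assoc)
    also have "\<dots> = p * (q1 * q2)" using cenD[OF c1, of p] by (simp add: mult.assoc[symmetric])
    finally show "q1 * q2 * p = p * (q1 * q2)" .
  qed
  have rJ: "ring_ideal J" unfolding ring_ideal_def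
  proof (intro conjI ballI allI)
    have "0 \<in> D2" "0 \<in> D1" "\<iota> 0 = q2 * \<iota> 0" using ideal_zero[OF r1] ideal_zero[OF r2] by simp_all
    then show "0 \<in> J" unfolding J_def by blast
    fix x assume "x \<in> J"
    then obtain b where x: "x \<in> D2" and b: "b \<in> D1" "\<iota> b = q2 * \<iota> x" unfolding J_def by blast
    have "- x \<in> D2" "- b \<in> D1" "\<iota> (- b) = q2 * \<iota> (- x)"
      using ideal_neg[OF r2 x] ideal_neg[OF r1 b(1)] b(2) by simp_all
    then show "- x \<in> J" unfolding J_def by blast
    fix r
    have "r * x \<in> D2" "r * b \<in> D1" using ideal_mulL[OF r2 x] ideal_mulL[OF r1 b(1)] by auto
    moreover have "\<iota> (r * b) = q2 * \<iota> (r * x)"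
      using b(2) cenD[OF c2, of "\<iota> r"] by (simp add: mult.assoc[symmetric])
    ultimately show "r * x \<in> J" unfolding J_def by blast
    have "x * r \<in> D2" "b * r \<in> D1" using ideal_mulR[OF r2 x] ideal_mulR[OF r1 b(1)] by auto
    moreover have "\<iota> (b * r) = q2 * \<iota> (x * r)"
      using b(2) by (simp add: mult.assoc)
    ultimately show "x * r \<in> J" unfolding J_def by blast
  next
    fix x y assume "x \<in> J" "y \<in> J"
    then obtain b c where "x \<in> D2" "b \<in> D1" "\<iota> b = q2 * \<iota> x" "y \<in> D2" "c \<in> D1" "\<iota> c = q2 * \<iota> y"
      unfolding J_def by blast
    then have "x + y \<in> D2" "b + c \<in> D1" "\<iota> (b + c) = q2 * \<iota> (x + y)"
      using ideal_add[OF r2] ideal_add[OF r1] by (simp_all add: distrib_left)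
    then show "x + y \<in> J" unfolding J_def by blast
  qed
  have prodJ: "i * j \<in> J" if i: "i \<in> D1 \<inter> D2" and j: "j \<in> D2" for i j
  proof -
    obtain b where b: "\<iota> b = q2 * \<iota> j" using D2e[OF j] by blast
    have "i * b \<in> D1" using ideal_mulR[OF r1] i by blast
    moreover have "\<iota> (i * b) = q2 * \<iota> (i * j)"
      using b cenD[OF c2, of "\<iota> i"] by (simp add: mult.assoc[symmetric])
    moreover have "i * j \<in> D2" using ideal_mulR[OF r2] i by blast
    ultimately show ?thesis unfolding J_def by blast
  qed
  have dJ: "J \<in> dense_ideals"
  proof (rule denseI[OF rJ])
    fix x assume h: "\<And>i. i \<in> J \<Longrightarrow> x * i = 0"
    have "x * i = 0" if i: "i \<in> D1 \<inter> D2" for i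
      by (rule denseD(2)[OF d2]) (use h prodJ[OF i] in \<open>simp add: mult.assoc\<close>)
    then show "x = 0" by (rule denseD(2)[OF d12])
  next
    fix x assume h: "\<And>i. i \<in> J \<Longrightarrow> i * x = 0"
    have "j * x = 0" if j: "j \<in> D2" for j
      by (rule denseD(3)[OF d12]) (use h prodJ[OF _ j] in \<open>simp add: mult.assoc[symmetric]\<close>)
    then show "x = 0" by (rule denseD(3)[OF d2])
  qed
  show "good (q1 * q2) J" unfolding good_def
  proof (intro conjI allI ballI)
    show "J \<in> dense_ideals" by fact
  next
    fix h k assume "k \<in> J"
    then obtain b where k: "k \<in> D2" and b: "b \<in> D1" "\<iota> b = q2 * \<iota> k" unfolding J_def by blast
    show "act h k \<in> J" unfolding J_def using cl2[OF k] cl1[OF b(1)] CH_tr[OF q2 b(2)] by blast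
  next
    fix k assume "k \<in> J"
    then obtain b where k: "k \<in> D2" and b: "b \<in> D1" "\<iota> b = q2 * \<iota> k" unfolding J_def by blast
    obtain b1 where b1: "\<iota> b1 = q1 * \<iota> b" using D1e[OF b(1)] by blast
    show "\<exists>b. \<iota> b = q1 * q2 * \<iota> k \<and> (\<forall>h. \<iota> (act h b) = q1 * q2 * \<iota> (act h k))"
      using b1 b(2) CH_tr[OF q1 b1] CH_tr[OF q2 b(2)]
      by (intro exI[of _ b1]) (simp add: mult.assoc)
  qed
qed

lemma CH_comm: "x \<in> extended_H_center act \<iota> \<Longrightarrow> x * y = y * x"
  unfolding extended_H_center_def extended_center_def by blast

lemma CH_cring: "cring (subring_struct (extended_H_center act \<iota>))"
  apply (rule cring_sub)
       apply (erule (1) CH_add)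
      apply (erule (1) CH_mul)
     apply (erule CH_neg)
    apply (rule CH_zero)
   apply (rule CH_one)
  apply (erule CH_comm)
  done


lemma CH_inv:
  assumes hp: "H_prime act" and q: "q \<in> extended_H_center act \<iota>" and qnz: "q \<noteq> 0"
  shows "\<exists>p\<in>extended_H_center act \<iota>. q * p = 1"
proof -
  have cq: "cen q" and gq: "good q (D_set \<iota> q)" using CH_good[OF q] by auto
  define J where "J = D_set \<iota> q"
  have Jd: "J \<in> dense_ideals" using gq unfolding good_def J_def by blast
  have rJ: "ring_ideal J" using denseD(1)[OF Jd] .
  have clJ: "act h k \<in> J" if "k \<in> J" for h k using that gq unfolding good_def J_def by blast
  have exb: "\<exists>b. \<iota> b = q * \<iota> k" if "k \<in> J" for k using that unfolding J_def D_cen[OF cq] by blast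
  have comm: "q * x = x * q" for x using cenD[OF cq] .
  define K where "K = {b. \<exists>d\<in>J. \<iota> b = q * \<iota> d}"
  define L where "L = {d\<in>J. q * \<iota> d = 0}"
  have rK: "ring_ideal K" unfolding ring_ideal_def
  proof (intro conjI ballI allI)
    show "0 \<in> K" unfolding K_def using ideal_zero[OF rJ] by (auto intro!: bexI[of _ 0])
    fix x assume "x \<in> K"
    then obtain d where d: "d \<in> J" "\<iota> x = q * \<iota> d" unfolding K_def by blast
    show "- x \<in> K" unfolding K_def using d ideal_neg[OF rJ d(1)] by (auto intro!: bexI[of _ "- d"])
    fix r
    have "\<iota> (r * x) = q * \<iota> (r * d)" using d(2) comm[of "\<iota> r"] by (simp add: mult.assoc[symmetric])
    then show "r * x \<in> K" unfolding K_def using ideal_mulL[OF rJ d(1)] by blast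
    have "\<iota> (x * r) = q * \<iota> (d * r)" using d(2) by (simp add: mult.assoc)
    then show "x * r \<in> K" unfolding K_def using ideal_mulR[OF rJ d(1)] by blast
  next
    fix x y assume "x \<in> K" "y \<in> K"
    then obtain d e where "d \<in> J" "\<iota> x = q * \<iota> d" "e \<in> J" "\<iota> y = q * \<iota> e" unfolding K_def by blast
    then show "x + y \<in> K" unfolding K_def using ideal_add[OF rJ]
      by (auto intro!: bexI[of _ "d + e"] simp: distrib_left)
  qed
  have actK: "act h b \<in> K" if bK: "b \<in> K" for h b
  proof -
    obtain d where d: "d \<in> J" "\<iota> b = q * \<iota> d" using bK unfolding K_def by blast
    show ?thesis unfolding K_def using CH_tr[OF q d(2)] clJ[OF d(1)] by blast
  qed
  have rL: "ring_ideal L" unfolding ring_ideal_def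
  proof (intro conjI ballI allI)
    show "0 \<in> L" unfolding L_def using ideal_zero[OF rJ] by simp
    fix x assume x: "x \<in> L"
    then have xJ: "x \<in> J" and x0: "q * \<iota> x = 0" unfolding L_def by auto
    show "- x \<in> L" unfolding L_def using ideal_neg[OF rJ xJ] x0 by simp
    fix r
    have "q * \<iota> (r * x) = \<iota> r * (q * \<iota> x)" using comm[of "\<iota> r"] by (simp add: mult.assoc[symmetric])
    then show "r * x \<in> L" unfolding L_def using ideal_mulL[OF rJ xJ] x0 by simp
    have "q * \<iota> (x * r) = (q * \<iota> x) * \<iota> r" by (simp add: mult.assoc)
    then show "x * r \<in> L" unfolding L_def using ideal_mulR[OF rJ xJ] x0 by simp
  next
    fix x y assume "x \<in> L" "y \<in> L"
    then show "x + y \<in> L" unfolding L_def using ideal_add[OF rJ] by (simp add: distrib_left)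
  qed
  have actL: "act h d \<in> L" if "d \<in> L" for h d
  proof -
    have dJ: "d \<in> J" and d0: "\<iota> 0 = q * \<iota> d" using that unfolding L_def by auto
    show ?thesis unfolding L_def using CH_tr[OF q d0, of h] clJ[OF dJ] by simp
  qed
  have HK: "H_ideal act K" unfolding H_ideal_def using rK actK by blast
  have HL: "H_ideal act L" unfolding H_ideal_def using rL actL by blast
  have KL: "ideal_prod K L = {0}"
  proof (rule ideal_prod_zero)
    fix x y assume "x \<in> K" "y \<in> L"
    then obtain d where "\<iota> x = q * \<iota> d" and y0: "q * \<iota> y = 0" unfolding K_def L_def by blast
    then have "\<iota> (x * y) = \<iota> d * (q * \<iota> y)" using comm[of "\<iota> d"] by (simp add: mult.assoc)
    then show "x * y = 0" using y0 \<iota>_eq0 by (metis mult_zero_right)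
  qed
  have Knz: "K \<noteq> {0}"
  proof
    assume K0: "K = {0}"
    have "q = 0"
    proof (rule ax_l[OF Jd])
      fix d assume d: "d \<in> J"
      obtain b where b: "\<iota> b = q * \<iota> d" using exb[OF d] by blast
      then have "b \<in> K" unfolding K_def using d by blast
      then show "q * \<iota> d = 0" using K0 b by simp
    qed
    then show False using qnz by simp
  qed
  have L0: "L = {0}"
  proof (rule ccontr)
    assume "L \<noteq> {0}"
    then have "ideal_prod K L \<noteq> {0}" using hp HK HL Knz unfolding H_prime_def by blast
    then show False using KL by simp
  qed
  have uniq: "d1 = d2" if "d1 \<in> J" "d2 \<in> J" "q * \<iota> d1 = q * \<iota> d2" for d1 d2
  proof -
    have "d1 - d2 \<in> L" unfolding L_def using that ideal_add[OF rJ that(1) ideal_neg[OF rJ that(2)]]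
      by (simp add: algebra_simps)
    then show ?thesis using L0 by simp
  qed
  have Kd: "K \<in> dense_ideals"
  proof (rule denseI[OF rK])
    fix x assume h: "\<And>i. i \<in> K \<Longrightarrow> x * i = 0"
    show "x = 0"
    proof (rule denseD(2)[OF Jd])
      fix d assume d: "d \<in> J"
      obtain b where b: "\<iota> b = q * \<iota> d" using exb[OF d] by blast
      then have "b \<in> K" unfolding K_def using d by blast
      then have xb: "x * b = 0" using h by simp
      have "q * \<iota> (x * d) = \<iota> x * \<iota> b" using b comm[of "\<iota> x"] by (simp add: mult.assoc[symmetric])
      then have "q * \<iota> (x * d) = q * \<iota> 0" using xb by (simp del: \<iota>_mul add: \<iota>_mul[symmetric])
      then show "x * d = 0" using uniq[OF ideal_mulL[OF rJ d] ideal_zero[OF rJ]] by blast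
    qed
  next
    fix x assume h: "\<And>i. i \<in> K \<Longrightarrow> i * x = 0"
    show "x = 0"
    proof (rule denseD(3)[OF Jd])
      fix d assume d: "d \<in> J"
      obtain b where b: "\<iota> b = q * \<iota> d" using exb[OF d] by blast
      then have "b \<in> K" unfolding K_def using d by blast
      then have xb: "b * x = 0" using h by simp
      have "q * \<iota> (d * x) = \<iota> b * \<iota> x" using b by (simp add: mult.assoc)
      then have "q * \<iota> (d * x) = q * \<iota> 0" using xb by (simp del: \<iota>_mul add: \<iota>_mul[symmetric])
      then show "d * x = 0" using uniq[OF ideal_mulR[OF rJ d] ideal_zero[OF rJ]] by blast
    qed
  qed
  define \<phi> where "\<phi> k = (SOME d. d \<in> J \<and> \<iota> k = q * \<iota> d)" for k
  have \<phi>s: "\<phi> k \<in> J" "\<iota> k = q * \<iota> (\<phi> k)" if "k \<in> K" for k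
    using someI_ex[of "\<lambda>d. d \<in> J \<and> \<iota> k = q * \<iota> d"] that unfolding K_def \<phi>_def by auto
  have \<phi>eq: "\<phi> k = d" if "k \<in> K" "d \<in> J" "\<iota> k = q * \<iota> d" for k d
    using uniq[OF \<phi>s(1)[OF that(1)] that(2)] \<phi>s(2)[OF that(1)] that(3) by simp
  obtain p where p: "\<And>x. x \<in> K \<Longrightarrow> p * \<iota> x = \<iota> (\<phi> x) \<and> \<iota> x * p = \<iota> (\<phi> x)"
  proof -
    have "\<exists>p. \<forall>x\<in>K. p * \<iota> x = \<iota> (\<phi> x) \<and> \<iota> x * p = \<iota> (\<phi> x)"
    proof (rule ax_ext[OF Kd])
      show "\<forall>x\<in>K. \<forall>y\<in>K. \<phi> (x + y) = \<phi> x + \<phi> y \<and> \<phi> (x + y) = \<phi> x + \<phi> y"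
      proof (intro ballI)
        fix x y assume x: "x \<in> K" and y: "y \<in> K"
        have "\<phi> (x + y) = \<phi> x + \<phi> y"
          using \<phi>eq[OF ideal_add[OF rK x y] ideal_add[OF rJ \<phi>s(1)[OF x] \<phi>s(1)[OF y]]]
            \<phi>s(2)[OF x] \<phi>s(2)[OF y] by (simp add: distrib_left)
        then show "\<phi> (x + y) = \<phi> x + \<phi> y \<and> \<phi> (x + y) = \<phi> x + \<phi> y" by simp
      qed
      show "\<forall>x\<in>K. \<forall>r. \<phi> (x * r) = \<phi> x * r \<and> \<phi> (r * x) = r * \<phi> x"
      proof (intro ballI allI conjI)
        fix x r assume x: "x \<in> K"
        show "\<phi> (x * r) = \<phi> x * r"
          using \<phi>eq[OF ideal_mulR[OF rK x] ideal_mulR[OF rJ \<phi>s(1)[OF x]]] \<phi>s(2)[OF x]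
          by (simp add: mult.assoc)
        have "\<iota> (r * x) = q * \<iota> (r * \<phi> x)"
          using \<phi>s(2)[OF x] comm[of "\<iota> r"] by (simp add: mult.assoc[symmetric])
        then show "\<phi> (r * x) = r * \<phi> x"
          using \<phi>eq[OF ideal_mulL[OF rK x] ideal_mulL[OF rJ \<phi>s(1)[OF x]]] by simp
      qed
      show "\<forall>x\<in>K. \<forall>y\<in>K. x * \<phi> y = \<phi> x * y"
      proof (intro ballI)
        fix x y assume x: "x \<in> K" and y: "y \<in> K"
        have "\<iota> (x * \<phi> y) = q * \<iota> (\<phi> x) * \<iota> (\<phi> y)" using \<phi>s(2)[OF x] by simp
        also have "\<dots> = \<iota> (\<phi> x * y)" using \<phi>s(2)[OF y] comm[of "\<iota> (\<phi> x)"]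
          by (simp add: mult.assoc)
        finally show "x * \<phi> y = \<phi> x * y" using \<iota>_inj by blast
      qed
    qed
    then show ?thesis using that by blast
  qed
  have \<phi>b: "\<phi> b = d" if "d \<in> J" "\<iota> b = q * \<iota> d" for b d
  proof -
    have "b \<in> K" unfolding K_def using that by blast
    then show ?thesis using \<phi>eq that by blast
  qed
  have pq: "p * q = 1"
  proof -
    have "p * q - 1 = 0"
    proof (rule ax_l[OF Jd])
      fix d assume d: "d \<in> J"
      obtain b where b: "\<iota> b = q * \<iota> d" using exb[OF d] by blast
      have bK: "b \<in> K" unfolding K_def using d b by blast
      have "p * q * \<iota> d = \<iota> d" using p[OF bK] b \<phi>b[OF d b] by (simp add: mult.assoc)
      then show "(p * q - 1) * \<iota> d = 0" by (simp add: algebra_simps)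
    qed
    then show ?thesis by simp
  qed
  have qp: "q * p = 1"
  proof -
    have "q * p - 1 = 0"
    proof (rule ax_r[OF Jd])
      fix d assume d: "d \<in> J"
      obtain b where b: "\<iota> b = q * \<iota> d" using exb[OF d] by blast
      have bK: "b \<in> K" unfolding K_def using d b by blast
      have "\<iota> d * q * p = \<iota> d" using p[OF bK] b \<phi>b[OF d b] comm[of "\<iota> d"] by simp
      then show "\<iota> d * (q * p - 1) = 0" by (simp add: algebra_simps)
    qed
    then show ?thesis by simp
  qed
  have cp: "cen p" unfolding extended_center_def
  proof (intro CollectI allI)
    fix r
    have "p * r = p * r * (q * p)" using qp by simp
    also have "\<dots> = p * (q * r) * p" using comm[of r] by (simp add: mult.assoc)
    also have "\<dots> = (p * q) * r * p" by (simp add: mult.assoc)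
    also have "\<dots> = r * p" using pq by simp
    finally show "p * r = r * p" .
  qed
  have gp: "good p K" unfolding good_def
  proof (intro conjI allI ballI)
    show "K \<in> dense_ideals" by fact
    show "act h k \<in> K" if "k \<in> K" for h k using actK that .
    fix k assume k: "k \<in> K"
    show "\<exists>b. \<iota> b = p * \<iota> k \<and> (\<forall>h. \<iota> (act h b) = p * \<iota> (act h k))"
    proof (intro exI[of _ "\<phi> k"] conjI allI)
      show "\<iota> (\<phi> k) = p * \<iota> k" using p[OF k] by simp
      fix h
      have "\<iota> (act h k) = q * \<iota> (act h (\<phi> k))" using CH_tr[OF q \<phi>s(2)[OF k]] .
      then have "\<phi> (act h k) = act h (\<phi> k)" using \<phi>eq[OF actK[OF k] clJ[OF \<phi>s(1)[OF k]]] by blast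
      then show "\<iota> (act h (\<phi> k)) = p * \<iota> (act h k)" using p[OF actK[OF k]] by simp
    qed
  qed
  show ?thesis using good_CH[OF cp gp] qp by blast
qed

lemma dir1:
  assumes hp: "H_prime act"
  shows "field (subring_struct (extended_H_center act \<iota>))"
proof (rule cring.cring_fieldI2[OF CH_cring])
  have "\<iota> (1::'a) \<noteq> \<iota> 0" using \<iota>_inj[of 1 0] by simp
  then show "\<zero>\<^bsub>subring_struct (extended_H_center act \<iota>)\<^esub> \<noteq> \<one>\<^bsub>subring_struct (extended_H_center act \<iota>)\<^esub>"
    by simp
  fix a assume "a \<in> carrier (subring_struct (extended_H_center act \<iota>))"
    "a \<noteq> \<zero>\<^bsub>subring_struct (extended_H_center act \<iota>)\<^esub>"
  then show "\<exists>b\<in>carrier (subring_struct (extended_H_center act \<iota>)).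
     a \<otimes>\<^bsub>subring_struct (extended_H_center act \<iota>)\<^esub> b = \<one>\<^bsub>subring_struct (extended_H_center act \<iota>)\<^esub>"
    using CH_inv[OF hp] by simp
qed


lemma cen_from_A:
  assumes z: "\<And>a. z * \<iota> a = \<iota> a * z" shows "cen z"
  unfolding extended_center_def
proof (intro CollectI allI)
  fix r
  obtain I where I: "I \<in> dense_ideals" and Ix: "\<And>x. x \<in> I \<Longrightarrow> r * \<iota> x \<in> range \<iota>"
    using ax_ex[of r] by blast
  have "z * r - r * z = 0"
  proof (rule ax_l[OF I])
    fix x assume x: "x \<in> I"
    obtain a where a: "r * \<iota> x = \<iota> a" using Ix[OF x] by auto
    have "z * r * \<iota> x = \<iota> a * z" using a z[of a] by (simp add: mult.assoc)
    moreover have "r * z * \<iota> x = \<iota> a * z"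
    proof -
      have "r * z * \<iota> x = r * (\<iota> x * z)" using z[of x] by (simp add: mult.assoc)
      also have "\<dots> = \<iota> a * z" using a by (simp add: mult.assoc[symmetric])
      finally show ?thesis .
    qed
    ultimately show "(z * r - r * z) * \<iota> x = 0" by (simp add: algebra_simps)
  qed
  then show "z * r = r * z" by simp
qed

end

lemma SP1:
  assumes sp: "semiprime TYPE('a::ring_1)" and rI: "ring_ideal (I :: 'a set)"
    and y: "y \<in> I" and h: "\<forall>i\<in>I. y * i = 0"
  shows "y = 0"
proof -
  define Y where "Y = {y\<in>I. \<forall>i\<in>I. y * i = 0}"
  have rY: "ring_ideal Y" unfolding ring_ideal_def Y_def
  proof (intro conjI ballI allI)
    show "0 \<in> {y \<in> I. \<forall>i\<in>I. y * i = 0}" using ideal_zero[OF rI] by simp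
    fix x assume x: "x \<in> {y \<in> I. \<forall>i\<in>I. y * i = 0}"
    then show "- x \<in> {y \<in> I. \<forall>i\<in>I. y * i = 0}" using ideal_neg[OF rI] by simp
    fix r
    show "r * x \<in> {y \<in> I. \<forall>i\<in>I. y * i = 0}" using x ideal_mulL[OF rI] by (simp add: mult.assoc)
    show "x * r \<in> {y \<in> I. \<forall>i\<in>I. y * i = 0}" using x ideal_mulR[OF rI] ideal_mulL[OF rI]
      by (simp add: mult.assoc)
  next
    fix x z assume "x \<in> {y \<in> I. \<forall>i\<in>I. y * i = 0}" "z \<in> {y \<in> I. \<forall>i\<in>I. y * i = 0}"
    then show "x + z \<in> {y \<in> I. \<forall>i\<in>I. y * i = 0}" using ideal_add[OF rI] by (simp add: distrib_right)
  qed
  have "ideal_prod Y Y = {0}" by (rule ideal_prod_zero) (auto simp: Y_def)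
  then have "Y = {0}" using sp rY unfolding semiprime_def by blast
  then show ?thesis using y h unfolding Y_def by blast
qed

lemma SP2:
  assumes sp: "semiprime TYPE('a::ring_1)" and rI: "ring_ideal (I :: 'a set)"
    and y: "y \<in> I" and h: "\<forall>i\<in>I. i * y = 0"
  shows "y = 0"
proof -
  define Y where "Y = {y\<in>I. \<forall>i\<in>I. i * y = 0}"
  have rY: "ring_ideal Y" unfolding ring_ideal_def Y_def
  proof (intro conjI ballI allI)
    show "0 \<in> {y \<in> I. \<forall>i\<in>I. i * y = 0}" using ideal_zero[OF rI] by simp
    fix x assume x: "x \<in> {y \<in> I. \<forall>i\<in>I. i * y = 0}"
    then show "- x \<in> {y \<in> I. \<forall>i\<in>I. i * y = 0}" using ideal_neg[OF rI] by simp
    fix r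
    show "r * x \<in> {y \<in> I. \<forall>i\<in>I. i * y = 0}" using x ideal_mulL[OF rI] ideal_mulR[OF rI]
      by (simp add: mult.assoc[symmetric])
    show "x * r \<in> {y \<in> I. \<forall>i\<in>I. i * y = 0}" using x ideal_mulR[OF rI]
      by (simp add: mult.assoc[symmetric])
  next
    fix x z assume "x \<in> {y \<in> I. \<forall>i\<in>I. i * y = 0}" "z \<in> {y \<in> I. \<forall>i\<in>I. i * y = 0}"
    then show "x + z \<in> {y \<in> I. \<forall>i\<in>I. i * y = 0}" using ideal_add[OF rI] by (simp add: distrib_left)
  qed
  have "ideal_prod Y Y = {0}" by (rule ideal_prod_zero) (auto simp: Y_def)
  then have "Y = {0}" using sp rY unfolding semiprime_def by blast
  then show ?thesis using y h unfolding Y_def by blast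
qed


context HQ begin

lemma lann_H:
  assumes HI: "H_ideal act I" and t: "\<forall>i\<in>I. t * i = 0" and k: "k \<in> I"
  shows "act h t * k = 0"
proof -
  have rI: "ring_ideal I" and cl: "\<And>h k. k \<in> I \<Longrightarrow> act h k \<in> I"
    using HI unfolding H_ideal_def by auto
  define G where "G x y k = act x t * act y k" for x y k
  have L1: "Vector_Spaces.linear sH sA (\<lambda>x. G x y k)" if "k \<in> I" for y k
    unfolding G_def by (rule lin_comp[OF act_linH lin_mulR])
  have L2: "Vector_Spaces.linear sH sA (\<lambda>y. G x y k)" if "k \<in> I" for x k
    unfolding G_def by (rule lin_comp[OF act_linH lin_mulL])
  have L3: "Vector_Spaces.linear sH sA (\<lambda>w. G x y (act w k))" if "k \<in> I" for x y k
    unfolding G_def by (rule lin_comp[OF lin_comp[OF act_linH act_lin] lin_mulL])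
  have MU: "G x (y * w) k = G x y (act w k)" if "k \<in> I" for x y w k
    unfolding G_def by (simp add: act_mul)
  have HY: "(\<Sum>(x,y)\<leftarrow>\<Delta> h. G x y k) = 0" if kI: "k \<in> I" for h k
  proof -
    have "(\<Sum>(x,y)\<leftarrow>\<Delta> h. G x y k) = act h (t * k)" unfolding G_def by (simp add: act_prod)
    then show ?thesis using t kI by simp
  qed
  have "G h 1 k = 0" by (rule anti_lemma[OF hopf vsA L1 L2 L3 MU cl HY k])
  then show ?thesis unfolding G_def by simp
qed

lemma dir2:
  assumes sp: "semiprime TYPE('a)" and fld: "field (subring_struct (extended_H_center act \<iota>))"
  shows "H_prime act"
  unfolding H_prime_def
proof (intro conjI allI impI)
  show "(UNIV :: 'a set) \<noteq> {0}" using zero_neq_one by (metis UNIV_I singletonD)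
  fix I Jn :: "'a set"
  assume asm: "H_ideal act I \<and> H_ideal act Jn \<and> I \<noteq> {0} \<and> Jn \<noteq> {0}"
  then have HI: "H_ideal act I" and HJ: "H_ideal act Jn" and Inz: "I \<noteq> {0}" and Jnz: "Jn \<noteq> {0}"
    by auto
  have rI: "ring_ideal I" and clI: "\<And>h k. k \<in> I \<Longrightarrow> act h k \<in> I"
    using HI unfolding H_ideal_def by auto
  have rJn: "ring_ideal Jn" using HJ unfolding H_ideal_def by auto
  show "ideal_prod I Jn \<noteq> {0}"
  proof
    assume IJ: "ideal_prod I Jn = {0}"
    have ij0: "i * j = 0" if "i \<in> I" "j \<in> Jn" for i j
      using ideal_prod_single[OF that] IJ by blast
    define T where "T = {x. \<forall>i\<in>I. x * i = 0}"
    have rT: "ring_ideal T" unfolding ring_ideal_def T_def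
    proof (intro conjI ballI allI)
      show "0 \<in> {x. \<forall>i\<in>I. x * i = 0}" by simp
      fix x assume x: "x \<in> {x. \<forall>i\<in>I. x * i = 0}"
      then show "- x \<in> {x. \<forall>i\<in>I. x * i = 0}" by simp
      fix r
      show "r * x \<in> {x. \<forall>i\<in>I. x * i = 0}" using x by (simp add: mult.assoc)
      show "x * r \<in> {x. \<forall>i\<in>I. x * i = 0}" using x ideal_mulL[OF rI] by (simp add: mult.assoc)
    next
      fix x y assume "x \<in> {x. \<forall>i\<in>I. x * i = 0}" "y \<in> {x. \<forall>i\<in>I. x * i = 0}"
      then show "x + y \<in> {x. \<forall>i\<in>I. x * i = 0}" by (simp add: distrib_right)
    qed
    have clT: "act h t \<in> T" if "t \<in> T" for h t
      using lann_H[OF HI] that unfolding T_def by blast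
    have rIJ: "ring_ideal (I \<inter> Jn)" using rI rJn unfolding ring_ideal_def by auto
    have JT: "Jn \<subseteq> T" unfolding T_def
    proof (intro subsetI CollectI ballI)
      fix j i assume j: "j \<in> Jn" and i: "i \<in> I"
      have ji: "j * i \<in> I \<inter> Jn" using ideal_mulL[OF rI i] ideal_mulR[OF rJn j] by blast
      show "j * i = 0"
      proof (rule SP1[OF sp rIJ ji])
        show "\<forall>z\<in>I \<inter> Jn. j * i * z = 0" using ji ij0 by blast
      qed
    qed
    have IT0: "y = 0" if "y \<in> I" "y \<in> T" for y
      using SP1[OF sp rI that(1)] that(2) unfolding T_def by blast
    have it0: "i * t = 0" if "i \<in> I" "t \<in> T" for i t
      using IT0[OF ideal_mulR[OF rI that(1)] ideal_mulL[OF rT that(2)]] .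
    have ti0: "t * i = 0" if "i \<in> I" "t \<in> T" for i t using that unfolding T_def by blast
    define E where "E = {i + t | i t. i \<in> I \<and> t \<in> T}"
    have rE: "ring_ideal E" unfolding ring_ideal_def E_def
    proof (intro conjI ballI allI)
      show "0 \<in> {i + t |i t. i \<in> I \<and> t \<in> T}" using ideal_zero[OF rI] ideal_zero[OF rT] by force
      fix x assume "x \<in> {i + t |i t. i \<in> I \<and> t \<in> T}"
      then obtain i t where x: "x = i + t" "i \<in> I" "t \<in> T" by blast
      show "- x \<in> {i + t |i t. i \<in> I \<and> t \<in> T}" using x ideal_neg[OF rI] ideal_neg[OF rT]
        by (intro CollectI exI[of _ "- i"] exI[of _ "- t"]) simp
      fix r
      show "r * x \<in> {i + t |i t. i \<in> I \<and> t \<in> T}" using x ideal_mulL[OF rI] ideal_mulL[OF rT]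
        by (intro CollectI exI[of _ "r * i"] exI[of _ "r * t"]) (simp add: distrib_left)
      show "x * r \<in> {i + t |i t. i \<in> I \<and> t \<in> T}" using x ideal_mulR[OF rI] ideal_mulR[OF rT]
        by (intro CollectI exI[of _ "i * r"] exI[of _ "t * r"]) (simp add: distrib_right)
    next
      fix x y assume "x \<in> {i + t |i t. i \<in> I \<and> t \<in> T}" "y \<in> {i + t |i t. i \<in> I \<and> t \<in> T}"
      then obtain i t i' t' where "x = i + t" "i \<in> I" "t \<in> T" "y = i' + t'" "i' \<in> I" "t' \<in> T" by blast
      then show "x + y \<in> {i + t |i t. i \<in> I \<and> t \<in> T}" using ideal_add[OF rI] ideal_add[OF rT]
        by (intro CollectI exI[of _ "i + i'"] exI[of _ "t + t'"]) (simp add: algebra_simps)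
    qed
    have IE: "i \<in> E" if "i \<in> I" for i
      unfolding E_def using that ideal_zero[OF rT] by force
    have TE: "t \<in> E" if "t \<in> T" for t
      unfolding E_def using that ideal_zero[OF rI] by force
    have dE: "E \<in> dense_ideals"
    proof (rule denseI[OF rE])
      fix x assume h: "\<And>e. e \<in> E \<Longrightarrow> x * e = 0"
      have xT: "x \<in> T" unfolding T_def using h IE by blast
      show "x = 0" using SP1[OF sp rT xT] h TE by blast
    next
      fix x assume h: "\<And>e. e \<in> E \<Longrightarrow> e * x = 0"
      have "x * i = 0" if i: "i \<in> I" for i
      proof (rule SP2[OF sp rI ideal_mulL[OF rI i]])
        show "\<forall>i'\<in>I. i' * (x * i) = 0" using h IE by (simp add: mult.assoc[symmetric])
      qed
      then have xT: "x \<in> T" unfolding T_def by blast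
      show "x = 0" using SP2[OF sp rT xT] h TE by blast
    qed
    have uniqE: "i = i'" if "i \<in> I" "i' \<in> I" "x - i \<in> T" "x - i' \<in> T" for x i i'
    proof -
      have "i - i' \<in> I" using ideal_add[OF rI that(1) ideal_neg[OF rI that(2)]] by simp
      moreover have "i - i' \<in> T" using ideal_add[OF rT that(4) ideal_neg[OF rT that(3)]] by simp
      ultimately have "i - i' = 0" using IT0 by blast
      then show ?thesis by simp
    qed
    define \<pi> where "\<pi> x = (SOME i. i \<in> I \<and> x - i \<in> T)" for x
    have \<pi>s: "\<pi> x \<in> I" "x - \<pi> x \<in> T" if xE: "x \<in> E" for x
    proof -
      obtain i t where "x = i + t" "i \<in> I" "t \<in> T" using xE unfolding E_def by blast
      then have "\<exists>i. i \<in> I \<and> x - i \<in> T" by (intro exI[of _ i]) simp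
      then show "\<pi> x \<in> I" "x - \<pi> x \<in> T" using someI_ex unfolding \<pi>_def by (metis (mono_tags, lifting))+
    qed
    have \<pi>eq: "\<pi> x = i" if "x \<in> E" "i \<in> I" "x - i \<in> T" for x i
      using uniqE[OF \<pi>s(1)[OF that(1)] that(2) \<pi>s(2)[OF that(1)] that(3)] .
    obtain e0 where e0: "\<And>x. x \<in> E \<Longrightarrow> e0 * \<iota> x = \<iota> (\<pi> x) \<and> \<iota> x * e0 = \<iota> (\<pi> x)"
    proof -
      have "\<exists>p. \<forall>x\<in>E. p * \<iota> x = \<iota> (\<pi> x) \<and> \<iota> x * p = \<iota> (\<pi> x)"
      proof (rule ax_ext[OF dE])
        show "\<forall>x\<in>E. \<forall>y\<in>E. \<pi> (x + y) = \<pi> x + \<pi> y \<and> \<pi> (x + y) = \<pi> x + \<pi> y"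
        proof (intro ballI)
          fix x y assume x: "x \<in> E" and y: "y \<in> E"
          have dd: "x + y - (\<pi> x + \<pi> y) = (x - \<pi> x) + (y - \<pi> y)" by (simp add: algebra_simps)
          have "x + y - (\<pi> x + \<pi> y) \<in> T" unfolding dd by (rule ideal_add[OF rT \<pi>s(2)[OF x] \<pi>s(2)[OF y]])
          then show "\<pi> (x + y) = \<pi> x + \<pi> y \<and> \<pi> (x + y) = \<pi> x + \<pi> y"
            using \<pi>eq[OF ideal_add[OF rE x y] ideal_add[OF rI \<pi>s(1)[OF x] \<pi>s(1)[OF y]]] by simp
        qed
        show "\<forall>x\<in>E. \<forall>r. \<pi> (x * r) = \<pi> x * r \<and> \<pi> (r * x) = r * \<pi> x"
        proof (intro ballI allI conjI)
          fix x r assume x: "x \<in> E"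
          have dd: "x * r - \<pi> x * r = (x - \<pi> x) * r" by (simp add: algebra_simps)
          have "x * r - \<pi> x * r \<in> T" unfolding dd by (rule ideal_mulR[OF rT \<pi>s(2)[OF x]])
          then show "\<pi> (x * r) = \<pi> x * r"
            using \<pi>eq[OF ideal_mulR[OF rE x] ideal_mulR[OF rI \<pi>s(1)[OF x]]] by simp
          have dd: "r * x - r * \<pi> x = r * (x - \<pi> x)" by (simp add: algebra_simps)
          have "r * x - r * \<pi> x \<in> T" unfolding dd by (rule ideal_mulL[OF rT \<pi>s(2)[OF x]])
          then show "\<pi> (r * x) = r * \<pi> x"
            using \<pi>eq[OF ideal_mulL[OF rE x] ideal_mulL[OF rI \<pi>s(1)[OF x]]] by simp
        qed
        show "\<forall>x\<in>E. \<forall>y\<in>E. x * \<pi> y = \<pi> x * y"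
        proof (intro ballI)
          fix x y assume x: "x \<in> E" and y: "y \<in> E"
          have "x * \<pi> y = \<pi> x * \<pi> y + (x - \<pi> x) * \<pi> y" by (simp add: algebra_simps)
          also have "(x - \<pi> x) * \<pi> y = 0" using ti0[OF \<pi>s(1)[OF y] \<pi>s(2)[OF x]] .
          also have "\<pi> x * y = \<pi> x * \<pi> y + \<pi> x * (y - \<pi> y)" by (simp add: algebra_simps)
          moreover have "\<pi> x * (y - \<pi> y) = 0" using it0[OF \<pi>s(1)[OF x] \<pi>s(2)[OF y]] .
          ultimately show "x * \<pi> y = \<pi> x * y" by simp
        qed
      qed
      then show ?thesis using that by blast
    qed
    have \<pi>I: "\<pi> i = i" if "i \<in> I" for i using \<pi>eq[OF IE[OF that] that] ideal_zero[OF rT] by simp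
    have \<pi>T: "\<pi> t = 0" if "t \<in> T" for t using \<pi>eq[OF TE[OF that] ideal_zero[OF rI]] that by simp
    have \<pi>E: "\<pi> x \<in> E" if "x \<in> E" for x using IE[OF \<pi>s(1)[OF that]] .
    have ecomm: "e0 * \<iota> a = \<iota> a * e0" for a
    proof -
      have "e0 * \<iota> a - \<iota> a * e0 = 0"
      proof (rule ax_l[OF dE])
        fix x assume x: "x \<in> E"
        have "e0 * \<iota> a * \<iota> x = \<iota> (\<pi> (a * x))" using e0[OF ideal_mulL[OF rE x]] by (simp add: mult.assoc)
        also have "\<pi> (a * x) = a * \<pi> x"
        proof -
          have dd: "a * x - a * \<pi> x = a * (x - \<pi> x)" by (simp add: algebra_simps)
          have "a * x - a * \<pi> x \<in> T" unfolding dd by (rule ideal_mulL[OF rT \<pi>s(2)[OF x]])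
          then show ?thesis using \<pi>eq[OF ideal_mulL[OF rE x] ideal_mulL[OF rI \<pi>s(1)[OF x]]] by simp
        qed
        also have "\<iota> (a * \<pi> x) = \<iota> a * e0 * \<iota> x" using e0[OF x] by (simp add: mult.assoc)
        finally show "(e0 * \<iota> a - \<iota> a * e0) * \<iota> x = 0" by (simp add: algebra_simps)
      qed
      then show ?thesis by simp
    qed
    have ce: "cen e0" by (rule cen_from_A[OF ecomm])
    have ge: "good e0 E" unfolding good_def
    proof (intro conjI allI ballI)
      show "E \<in> dense_ideals" by fact
    next
      fix h k assume "k \<in> E"
      then obtain i t where k: "k = i + t" "i \<in> I" "t \<in> T" unfolding E_def by blast
      show "act h k \<in> E" unfolding E_def using k clI[OF k(2)] clT[OF k(3)]
        by (intro CollectI exI[of _ "act h i"] exI[of _ "act h t"]) simp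
    next
      fix k assume kE: "k \<in> E"
      then obtain i t where k: "k = i + t" "i \<in> I" "t \<in> T" unfolding E_def by blast
      have pk: "\<pi> k = i" using \<pi>eq[OF kE k(2)] k by simp
      show "\<exists>b. \<iota> b = e0 * \<iota> k \<and> (\<forall>h. \<iota> (act h b) = e0 * \<iota> (act h k))"
      proof (intro exI[of _ i] conjI allI)
        show "\<iota> i = e0 * \<iota> k" using e0[OF kE] pk by simp
        fix h
        have akE: "act h k \<in> E" unfolding E_def using k clI[OF k(2)] clT[OF k(3)]
          by (intro CollectI exI[of _ "act h i"] exI[of _ "act h t"]) simp
        have "\<pi> (act h k) = act h i" using \<pi>eq[OF akE clI[OF k(2)]] k clT by simp
        then show "\<iota> (act h i) = e0 * \<iota> (act h k)" using e0[OF akE] by simp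
      qed
    qed
    have eCH: "e0 \<in> extended_H_center act \<iota>" by (rule good_CH[OF ce ge])
    have fCH: "1 + - e0 \<in> extended_H_center act \<iota>" by (rule CH_add[OF CH_one CH_neg[OF eCH]])
    have idem: "e0 * (1 + - e0) = 0"
    proof -
      have "e0 - e0 * e0 = 0"
      proof (rule ax_l[OF dE])
        fix x assume x: "x \<in> E"
        have "e0 * e0 * \<iota> x = \<iota> (\<pi> x)"
          using e0[OF x] e0[OF \<pi>E[OF x]] \<pi>I[OF \<pi>s(1)[OF x]] by (simp add: mult.assoc)
        then show "(e0 - e0 * e0) * \<iota> x = 0" using e0[OF x] by (simp add: algebra_simps)
      qed
      then show ?thesis by (simp add: algebra_simps)
    qed
    have dom: "domain (subring_struct (extended_H_center act \<iota>))" using fld by (rule field.axioms(1))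
    have "e0 = 0 \<or> 1 + - e0 = 0"
      using domain.integral[OF dom, of e0 "1 + - e0"] idem eCH fCH by simp
    moreover have "e0 \<noteq> 0"
    proof -
      obtain i where i: "i \<in> I" "i \<noteq> 0" using Inz ideal_zero[OF rI] by blast
      have "e0 * \<iota> i = \<iota> i" using e0[OF IE[OF i(1)]] \<pi>I[OF i(1)] by simp
      then show ?thesis using i by auto
    qed
    moreover have "1 + - e0 \<noteq> 0"
    proof -
      obtain j where j: "j \<in> Jn" "j \<noteq> 0" using Jnz ideal_zero[OF rJn] by blast
      have jT: "j \<in> T" using JT j by blast
      have "e0 * \<iota> j = 0" using e0[OF TE[OF jT]] \<pi>T[OF jT] by simp
      then show ?thesis using j by (auto simp: eq_neg_iff_add_eq_0[symmetric])
    qed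
    ultimately show False by blast
  qed
qed

end

theorem proposition2p2:
  fixes sH :: "'k::field \<Rightarrow> 'h::ring_1 \<Rightarrow> 'h"
    and \<Delta> :: "'h \<Rightarrow> ('h \<times> 'h) list"
    and \<epsilon> :: "'h \<Rightarrow> 'k"
    and S :: "'h \<Rightarrow> 'h"
    and sA :: "'k \<Rightarrow> 'a::ring_1 \<Rightarrow> 'a"
    and act :: "'h \<Rightarrow> 'a \<Rightarrow> 'a"
    and \<iota> :: "'a \<Rightarrow> 'q::ring_1"
  assumes "hopf_algebra sH \<Delta> \<epsilon> S"
    and "bij S"
    and "module_algebra sH \<Delta> \<epsilon> sA act"
    and "sym_ring_of_quotients \<iota>"
  shows "(H_prime act \<longrightarrow> field (subring_struct (extended_H_center act \<iota>))) \<and>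
         (semiprime TYPE('a) \<and> field (subring_struct (extended_H_center act \<iota>)) \<longrightarrow> H_prime act)"
proof -
  interpret HQ sH \<Delta> \<epsilon> S sA act \<iota>
    using assms(1,3,4) by unfold_locales
  show ?thesis using dir1 dir2 by blast
qed

end
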